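(* For any values of $k$, $\mu$, $\nu$, and for $\lambda\neq0$, \[ \,_{3}F_{4}\left(\tfrac{1}{2},\tfrac{\mu}{2}+\tfrac{\nu}{2}+\tfrac{1}{2},\tfrac{\mu}{2}+\tfrac{\nu}{2}+1;\lambda+1,\mu+1,\nu+1,\mu+\nu+1;-k^{2}\right) =\frac{\Gamma(\lambda+1)2^{\mu+\nu}\Gamma(\mu+1)\Gamma(\nu+1)}{\sqrt{\pi}\,\Gamma\left(\lambda+\frac{1}{2}\right)\Gamma(\lambda)^{2}} \sum_{L=0}^{\infty}\frac{(-1)^{2L}k^{4L}\left(\left(\lambda+\frac{1}{2}\right)_{2L}\right)^{2}\Gamma(2L+2\lambda)\,2^{4L-2\lambda-\mu-\nu+1}}{(2L)!\,(2L+\lambda)\left((2\lambda)_{2L}\right)^{2}\left((2L+2\lambda)_{2L}\right)^{2}\left(L+\frac{1}{2}\right)_{\mu+\frac{1}{2}}\left(L+\frac{1}{2}\right)_{\nu+\frac{1}{2}}} \,_{1}F_{2}\left(L+\tfrac{1}{2};2L+\lambda+1,L+\mu+1;-\tfrac{k^{2}}{4}\right)\,_{1}F_{2}\left(L+\tfrac{1}{2};2L+\lambda+1,L+\nu+1;-\tfrac{k^{2}}{4}\right). \]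
   Context: $\,_{p}F_{q}(a_1,\dots,a_p;b_1,\dots,b_q;z)=\sum_{n\ge0}\frac{(a_1)_n\cdots(a_p)_n}{(b_1)_n\cdots(b_q)_n}\frac{z^n}{n!}$ is the generalized hypergeometric function. $(c)_g=\Gamma(c+g)/\Gamma(c)$ denotes the Pochhammer symbol (for arbitrary, possibly non-integer, $g$). *)

theory Defs
  imports "HOL-Analysis.Analysis"
begin

definition hypF :: "complex list \<Rightarrow> complex list \<Rightarrow> complex \<Rightarrow> complex" where
  "hypF as bs z = (\<Sum>n. (\<Prod>a\<leftarrow>as. pochhammer a n) / (\<Prod>b\<leftarrow>bs. pochhammer b n)
                         * z ^ n / fact n)"

definition gpoch :: "complex \<Rightarrow> complex \<Rightarrow> complex" where
  "gpoch c g = Gamma (c + g) / Gamma c"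

end

theory Submission
  imports Defs
begin


definition dr :: "complex \<Rightarrow> nat \<Rightarrow> nat \<Rightarrow> complex" where
 "dr lam q L = pochhammer lam L * pochhammer (lam + 1/2) L * pochhammer (- of_nat q) L /
     (pochhammer (1/2) L * fact L * pochhammer (lam + 1 + of_nat q) L)"

definition du :: "complex \<Rightarrow> nat \<Rightarrow> nat \<Rightarrow> nat \<Rightarrow> complex" where
 "du lam q p L = (lam + 2 * of_nat L) / lam * dr lam q L * pochhammer (- of_nat p) L
     / pochhammer (lam + 1 + of_nat p) L"

definition dF :: "complex \<Rightarrow> nat \<Rightarrow> nat \<Rightarrow> complex" where
 "dF lam q p = pochhammer (1 + lam) p * pochhammer (1/2 + of_nat q) p /
     (pochhammer (1/2) p * pochhammer (1 + lam + of_nat q) p)"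

definition drho :: "complex \<Rightarrow> nat \<Rightarrow> nat \<Rightarrow> complex" where
 "drho lam q p = (1 + lam + of_nat p) * (1/2 + of_nat q + of_nat p) /
     ((1/2 + of_nat p) * (1 + lam + of_nat q + of_nat p))"

definition dH :: "complex \<Rightarrow> nat \<Rightarrow> nat \<Rightarrow> nat \<Rightarrow> complex" where
 "dH lam q p L = - drho lam q p * of_nat L * (2 * of_nat L - 1) * (of_nat L + lam + of_nat q)
     / ((2 * of_nat p + 2 * of_nat q + 1) * lam * (of_nat p + 1))
     * dr lam q L * pochhammer (- of_nat p - 1) L / pochhammer (lam + 1 + of_nat p) L"

lemma nonpos_shift_ne0:
  fixes lam :: complex
  assumes "lam \<notin> \<int>\<^sub>\<le>\<^sub>0"
  shows "lam + of_nat n \<noteq> 0"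
proof
  assume "lam + of_nat n = 0"
  then have "lam = - of_nat n" by (simp add: eq_neg_iff_add_eq_0)
  then show False using assms by simp
qed

lemma half_shift_ne0: "(1/2::complex) + of_nat n \<noteq> 0"
proof
  assume "(1/2::complex) + of_nat n = 0"
  then have "Re ((1/2::complex) + of_nat n) = 0" by simp
  then show False by simp
qed

lemma poch_shift_ne0:
  fixes lam :: complex
  assumes "lam \<notin> \<int>\<^sub>\<le>\<^sub>0"
  shows "pochhammer (lam + of_nat a) n \<noteq> 0"
proof
  assume "pochhammer (lam + of_nat a) n = 0"
  then obtain k where "lam + of_nat a = - of_nat k" by (auto simp: pochhammer_eq_0_iff)
  then have "lam + of_nat (a + k) = 0" by (simp add: eq_neg_iff_add_eq_0 add.assoc)
  with nonpos_shift_ne0[OF assms] show False by blast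
qed

lemma poch_half_ne0: "pochhammer (1/2::complex) n \<noteq> 0"
  using half_shift_ne0 by (auto simp: pochhammer_eq_0_iff eq_neg_iff_add_eq_0)

lemma dr_Suc:
  assumes "lam \<notin> \<int>\<^sub>\<le>\<^sub>0"
  shows "dr lam q (Suc L) = dr lam q L * ((lam + of_nat L) * (lam + 1/2 + of_nat L) * (of_nat L - of_nat q))
     / ((1/2 + of_nat L) * (of_nat L + 1) * (lam + 1 + of_nat q + of_nat L))"
proof -
  have a: "lam + 1 + of_nat q + of_nat L \<noteq> 0"
    using nonpos_shift_ne0[OF assms, of "1 + q + L"] by (simp add: add_ac)
  have e: "lam + 1 + of_nat q = lam + of_nat (Suc q)" by simp
  have b: "pochhammer (lam + 1 + of_nat q) L \<noteq> 0"
    unfolding e by (rule poch_shift_ne0[OF assms])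
  have d: "(1/2::complex) + of_nat L \<noteq> 0" by (rule half_shift_ne0)
  show ?thesis
    unfolding dr_def pochhammer_Suc using a b d poch_half_ne0[of L]
    by (simp add: field_simps)
qed


definition dB :: "complex \<Rightarrow> nat \<Rightarrow> nat \<Rightarrow> nat \<Rightarrow> complex" where
 "dB lam q p L = dr lam q L * pochhammer (- of_nat p - 1) L / pochhammer (lam + 1 + of_nat p) (Suc L)"

lemma du_Suc_p:
  assumes "lam \<notin> \<int>\<^sub>\<le>\<^sub>0"
  shows "du lam q (Suc p) L = (lam + 2 * of_nat L) / lam * (lam + 1 + of_nat p) * dB lam q p L"
proof -
  have e1: "(- of_nat (Suc p) :: complex) = - of_nat p - 1" by simp
  have e2: "pochhammer (lam + 1 + of_nat p) (Suc L) = (lam + 1 + of_nat p) * pochhammer (lam + 1 + of_nat (Suc p)) L"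
    by (simp add: pochhammer_rec add_ac)
  have n1: "lam + 1 + of_nat p \<noteq> 0" using nonpos_shift_ne0[OF assms, of "Suc p"] by (simp add: add_ac)
  have e3: "lam + 1 + of_nat (Suc p) = lam + of_nat (Suc (Suc p))" by simp
  have n2: "pochhammer (lam + 1 + of_nat (Suc p)) L \<noteq> 0" unfolding e3 by (rule poch_shift_ne0[OF assms])
  have l0: "lam \<noteq> 0" using nonpos_shift_ne0[OF assms, of 0] by simp
  define P where "P = pochhammer (lam + 1 + of_nat (Suc p)) L"
  define C where "C = lam + 1 + of_nat p"
  define X where "X = pochhammer (- of_nat p - 1 :: complex) L"
  define D where "D = dr lam q L"
  have "P \<noteq> 0" "C \<noteq> 0" using n1 n2 by (simp_all add: P_def C_def)
  then show ?thesis unfolding du_def dB_def e1 e2 unfolding P_def[symmetric] C_def[symmetric] X_def[symmetric] D_def[symmetric]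
    using l0 by (simp add: field_simps)
qed

lemma du_p:
  assumes "lam \<notin> \<int>\<^sub>\<le>\<^sub>0"
  shows "du lam q p L = (lam + 2 * of_nat L) / lam * ((of_nat p + 1 - of_nat L) / (of_nat p + 1))
     * (lam + 1 + of_nat p + of_nat L) * dB lam q p L"
proof -
  have e1: "pochhammer (- of_nat p - 1 :: complex) (Suc L) = (- of_nat p - 1) * pochhammer (- of_nat p) L"
    by (simp add: pochhammer_rec)
  have e1': "pochhammer (- of_nat p - 1 :: complex) (Suc L) = pochhammer (- of_nat p - 1) L * (- of_nat p - 1 + of_nat L)"
    by (simp add: pochhammer_Suc)
  have np: "(of_nat p + 1 :: complex) \<noteq> 0" by (metis of_nat_Suc of_nat_eq_0_iff add.commute nat.distinct(1))
  have e: "pochhammer (- of_nat p :: complex) L = pochhammer (- of_nat p - 1) L * ((of_nat p + 1 - of_nat L) / (of_nat p + 1))"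
  proof -
    define X where "X = pochhammer (- of_nat p - 1 :: complex) L"
    define Y where "Y = pochhammer (- of_nat p :: complex) L"
    from e1 e1' have "(- of_nat p - 1) * Y = X * (- of_nat p - 1 + of_nat L)" by (simp add: X_def Y_def)
    then show ?thesis unfolding X_def[symmetric] Y_def[symmetric] using np
      by (simp add: field_simps)
  qed
  have e2: "pochhammer (lam + 1 + of_nat p) (Suc L) = pochhammer (lam + 1 + of_nat p) L * (lam + 1 + of_nat p + of_nat L)"
    by (simp add: pochhammer_Suc)
  have e3: "lam + 1 + of_nat p = lam + of_nat (Suc p)" by simp
  have n2: "pochhammer (lam + 1 + of_nat p) L \<noteq> 0" unfolding e3 by (rule poch_shift_ne0[OF assms])
  have n1: "lam + 1 + of_nat p + of_nat L \<noteq> 0" using nonpos_shift_ne0[OF assms, of "Suc p + L"] by (simp add: add_ac)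
  have l0: "lam \<noteq> 0" using nonpos_shift_ne0[OF assms, of 0] by simp
  define P where "P = pochhammer (lam + 1 + of_nat p) L"
  define C where "C = lam + 1 + of_nat p + of_nat L"
  define X where "X = pochhammer (- of_nat p - 1 :: complex) L"
  define D where "D = dr lam q L"
  define Q where "Q = (of_nat p + 1 :: complex)"
  have "P \<noteq> 0" "C \<noteq> 0" "Q \<noteq> 0" using n1 n2 np by (simp_all add: P_def C_def Q_def)
  then show ?thesis unfolding du_def dB_def e e2 unfolding P_def[symmetric] C_def[symmetric] X_def[symmetric] D_def[symmetric]
     Q_def[symmetric]
    using l0 by (simp add: field_simps)
qed

lemma dH_L:
  assumes "lam \<notin> \<int>\<^sub>\<le>\<^sub>0"
  shows "dH lam q p L = - drho lam q p * of_nat L * (2 * of_nat L - 1) * (of_nat L + lam + of_nat q)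
     * (lam + 1 + of_nat p + of_nat L) / ((2 * of_nat p + 2 * of_nat q + 1) * lam * (of_nat p + 1)) * dB lam q p L"
proof -
  have e2: "pochhammer (lam + 1 + of_nat p) (Suc L) = pochhammer (lam + 1 + of_nat p) L * (lam + 1 + of_nat p + of_nat L)"
    by (simp add: pochhammer_Suc)
  have e3: "lam + 1 + of_nat p = lam + of_nat (Suc p)" by simp
  have n2: "pochhammer (lam + 1 + of_nat p) L \<noteq> 0" unfolding e3 by (rule poch_shift_ne0[OF assms])
  have n1: "lam + 1 + of_nat p + of_nat L \<noteq> 0" using nonpos_shift_ne0[OF assms, of "Suc p + L"] by (simp add: add_ac)
  define P where "P = pochhammer (lam + 1 + of_nat p) L"
  define C where "C = lam + 1 + of_nat p + of_nat L"
  define X where "X = pochhammer (- of_nat p - 1 :: complex) L"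
  define D where "D = dr lam q L"
  define R where "R = drho lam q p"
  define Z where "Z = (2 * of_nat p + 2 * of_nat q + 1) * lam * (of_nat p + 1 :: complex)"
  have z1: "(2 * of_nat p + 2 * of_nat q + 1 :: complex) \<noteq> 0"
  proof
    assume "(2 * of_nat p + 2 * of_nat q + 1 :: complex) = 0"
    then have "Re (2 * of_nat p + 2 * of_nat q + 1 :: complex) = 0" by simp
    then show False by simp
  qed
  have z2: "(of_nat p + 1 :: complex) \<noteq> 0" by (metis of_nat_Suc of_nat_eq_0_iff add.commute nat.distinct(1))
  have "Z \<noteq> 0" unfolding Z_def using nonpos_shift_ne0[OF assms, of 0] z1 z2 by simp
  moreover have "P \<noteq> 0" "C \<noteq> 0" using n1 n2 by (simp_all add: P_def C_def)
  ultimately show ?thesis unfolding dH_def dB_def e2 unfolding P_def[symmetric] C_def[symmetric] X_def[symmetric] D_def[symmetric]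
     R_def[symmetric] Z_def[symmetric]
    by (simp add: field_simps)
qed

lemma dH_SucL_aux:
  fixes R N B A Z D X P lam L q p :: complex
  assumes nz: "B\<noteq>0" "N\<noteq>0" "A\<noteq>0" "Z\<noteq>0" "P\<noteq>0"
  shows "- R * N * B * A / Z * (D*((lam+L)*(lam+1/2+L)*(L-q))/((B/2)*N*A)) * (X*(-p-1+L)) / P
     = - R*2*(lam+L)*(lam+1/2+L)*(L-q)*(L-p-1)/Z*(D*X/P)"
  using nz by (simp add: field_simps)

lemma dH_SucL:
  assumes "lam \<notin> \<int>\<^sub>\<le>\<^sub>0"
  shows "dH lam q p (Suc L) = - drho lam q p * 2 * (lam + of_nat L) * (lam + 1/2 + of_nat L) * (of_nat L - of_nat q)
     * (of_nat L - of_nat p - 1) / ((2 * of_nat p + 2 * of_nat q + 1) * lam * (of_nat p + 1)) * dB lam q p L"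
proof -
  have e1: "pochhammer (- of_nat p - 1 :: complex) (Suc L) = pochhammer (- of_nat p - 1) L * (- of_nat p - 1 + of_nat L)"
    by (simp add: pochhammer_Suc)
  have a: "lam + 1 + of_nat q + of_nat L \<noteq> 0"
    using nonpos_shift_ne0[OF assms, of "1 + q + L"] by (simp add: add_ac)
  have d2: "(of_nat L + 1 :: complex) \<noteq> 0" by (metis of_nat_Suc of_nat_eq_0_iff add.commute nat.distinct(1))
  have z1: "(2 * of_nat p + 2 * of_nat q + 1 :: complex) \<noteq> 0"
  proof
    assume "(2 * of_nat p + 2 * of_nat q + 1 :: complex) = 0"
    then have "Re (2 * of_nat p + 2 * of_nat q + 1 :: complex) = 0" by simp
    then show False by simp
  qed
  have z2: "(of_nat p + 1 :: complex) \<noteq> 0" by (metis of_nat_Suc of_nat_eq_0_iff add.commute nat.distinct(1))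
  have z3: "(2 * of_nat L + 1 :: complex) \<noteq> 0"
  proof
    assume "(2 * of_nat L + 1 :: complex) = 0"
    then have "Re (2 * of_nat L + 1 :: complex) = 0" by simp
    then show False by simp
  qed
  have zz: "(2 * of_nat p + 2 * of_nat q + 1) * lam * (of_nat p + 1 :: complex) \<noteq> 0"
    using nonpos_shift_ne0[OF assms, of 0] z1 z2 by simp
  have P: "pochhammer (lam + 1 + of_nat p) (Suc L) \<noteq> 0"
    using poch_shift_ne0[OF assms, of "Suc p" "Suc L"] by (simp add: add_ac)
  have ee: "(of_nat (Suc L) :: complex) = of_nat L + 1" "2 * (of_nat L + 1) - 1 = (2 * of_nat L + 1 :: complex)"
      "(1/2::complex) + of_nat L = (2 * of_nat L + 1) / 2"
      "of_nat L + 1 + lam + of_nat q = lam + 1 + of_nat q + of_nat L"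
    by (simp_all add: algebra_simps)
  show ?thesis
    unfolding dH_def dB_def dr_Suc[OF assms] e1 ee
    using dH_SucL_aux[OF z3 d2 a zz P, of "drho lam q p" "dr lam q L" lam "of_nat L" "of_nat q" "pochhammer (- of_nat p - 1) L" "of_nat p"]
    by (simp add: mult.assoc)
qed

lemma wz_poly:
  fixes lam L q p P1 H K W :: complex
  assumes nz: "lam \<noteq> 0" "P1 \<noteq> 0" "H \<noteq> 0" "K \<noteq> 0" "W \<noteq> 0"
   and eq: "P1 = p + 1" "H = 1 + 2*p" "K = 1 + lam + q + p" "W = 2*p+2*q+1"
  shows "(lam + 2*L)/lam*(lam+1+p) - ((1 + lam + p) * W / (H * K)) * ((lam + 2*L)/lam*((P1-L)/P1)*(lam+1+p+L))
     = (- ((1 + lam + p) * W / (H * K))*2*(lam+L)*(lam+1/2+L)*(L-q)*(L-p-1)/(W*lam*P1))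
       - (- ((1 + lam + p) * W / (H * K))*L*(2*L-1)*(L+lam+q)*(lam+1+p+L)/(W*lam*P1))"
proof -
  have s1: "(lam + 2*L)/lam*(lam+1+p) - ((1 + lam + p) * W / (H * K)) * ((lam + 2*L)/lam*((P1-L)/P1)*(lam+1+p+L))
     = (1+lam+p)/(lam*P1*H*K) * ((lam+2*L)*P1*H*K - W*(lam+2*L)*(P1-L)*(lam+1+p+L))"
    using nz by (simp add: field_simps)
  have s2: "(- ((1 + lam + p) * W / (H * K))*2*(lam+L)*(lam+1/2+L)*(L-q)*(L-p-1)/(W*lam*P1))
       - (- ((1 + lam + p) * W / (H * K))*L*(2*L-1)*(L+lam+q)*(lam+1+p+L)/(W*lam*P1))
     = (1+lam+p)/(lam*P1*H*K) * (-(lam+L)*(2*lam+1+2*L)*(L-q)*(L-p-1) + L*(2*L-1)*(L+lam+q)*(lam+1+p+L))"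
    using nz by (simp add: field_simps)
  have s3: "(lam+2*L)*P1*H*K - W*(lam+2*L)*(P1-L)*(lam+1+p+L) = 
     -(lam+L)*(2*lam+1+2*L)*(L-q)*(L-p-1) + L*(2*L-1)*(L+lam+q)*(lam+1+p+L)"
    unfolding eq by algebra
  show ?thesis using s1 s2 s3 by simp
qed

lemma lin_comb_aux:
  fixes a b c d R G :: complex
  assumes "a - R * b = c - d"
  shows "a * G - R * (b * G) = c * G - d * G"
proof -
  have "(a - R * b) * G = (c - d) * G" using assms by simp
  then show ?thesis by (simp add: algebra_simps)
qed

lemma drho_eq:
  assumes "lam \<notin> \<int>\<^sub>\<le>\<^sub>0"
  shows "drho lam q p = (1 + lam + of_nat p) * (2 * of_nat p + 2 * of_nat q + 1) /
      ((1 + 2 * of_nat p) * (1 + lam + of_nat q + of_nat p))"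
proof -
  have h: "(1/2::complex) + of_nat p \<noteq> 0" by (rule half_shift_ne0)
  have e1: "(1/2::complex) + of_nat q + of_nat p = (2 * of_nat p + 2 * of_nat q + 1) / 2" by (simp add: field_simps)
  have e2: "(1/2::complex) + of_nat p = (1 + 2 * of_nat p) / 2" by (simp add: field_simps)
  have H: "(1 + 2 * of_nat p :: complex) \<noteq> 0"
  proof
    assume "(1 + 2 * of_nat p :: complex) = 0"
    then have "Re (1 + 2 * of_nat p :: complex) = 0" by simp
    then show False by simp
  qed
  have K: "1 + lam + of_nat q + of_nat p \<noteq> 0"
    using nonpos_shift_ne0[OF assms, of "1 + q + p"] by (simp add: add_ac)
  define HH where "HH = (1 + 2 * of_nat p :: complex)"
  define KK where "KK = 1 + lam + of_nat q + of_nat p"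
  have "HH \<noteq> 0" "KK \<noteq> 0" using H K by (simp_all add: HH_def KK_def)
  then show ?thesis unfolding drho_def e1 e2 unfolding HH_def[symmetric] KK_def[symmetric] by (simp add: field_simps)
qed

lemma wz_step:
  assumes "lam \<notin> \<int>\<^sub>\<le>\<^sub>0"
  shows "du lam q (Suc p) L - drho lam q p * du lam q p L = dH lam q p (Suc L) - dH lam q p L"
proof -
  have l0: "lam \<noteq> 0" using nonpos_shift_ne0[OF assms, of 0] by simp
  have P1: "(of_nat p + 1 :: complex) \<noteq> 0" by (metis of_nat_Suc of_nat_eq_0_iff add.commute nat.distinct(1))
  have H: "(1 + 2 * of_nat p :: complex) \<noteq> 0"
  proof
    assume "(1 + 2 * of_nat p :: complex) = 0"
    then have "Re (1 + 2 * of_nat p :: complex) = 0" by simp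
    then show False by simp
  qed
  have K: "1 + lam + of_nat q + of_nat p \<noteq> 0"
    using nonpos_shift_ne0[OF assms, of "1 + q + p"] by (simp add: add_ac)
  have W: "(2 * of_nat p + 2 * of_nat q + 1 :: complex) \<noteq> 0"
  proof
    assume "(2 * of_nat p + 2 * of_nat q + 1 :: complex) = 0"
    then have "Re (2 * of_nat p + 2 * of_nat q + 1 :: complex) = 0" by simp
    then show False by simp
  qed
  note key = wz_poly[OF l0 P1 H K W refl refl refl refl, of "of_nat L"]
  show ?thesis
    unfolding du_Suc_p[OF assms] unfolding du_p[OF assms] dH_SucL[OF assms] unfolding dH_L[OF assms] drho_eq[OF assms]
    by (rule lin_comb_aux[OF key])
qed

lemma dougall_sum:
  assumes "lam \<notin> \<int>\<^sub>\<le>\<^sub>0"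
  shows "p < N \<Longrightarrow> (\<Sum>L<N. du lam q p L) = dF lam q p"
proof (induction p arbitrary: N)
  case 0
  then obtain M where M: "N = Suc M" by (cases N) auto
  have l0: "lam \<noteq> 0" using nonpos_shift_ne0[OF assms, of 0] by simp
  have z: "du lam q 0 (Suc L) = 0" for L by (simp add: du_def pochhammer_0_left)
  have "du lam q 0 0 = 1" using l0 by (simp add: du_def dr_def)
  then show ?case unfolding M sum.lessThan_Suc_shift z by (simp add: dF_def)
next
  case (Suc p)
  then have N: "p < N" by simp
  have "(\<Sum>L<N. du lam q (Suc p) L) = (\<Sum>L<N. drho lam q p * du lam q p L + (dH lam q p (Suc L) - dH lam q p L))"
    by (rule sum.cong) (auto simp: wz_step[OF assms, symmetric])
  also have "\<dots> = drho lam q p * (\<Sum>L<N. du lam q p L) + (dH lam q p N - dH lam q p 0)"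
    by (simp add: sum.distrib sum_distrib_left sum_lessThan_telescope)
  also have "dH lam q p N = 0"
  proof -
    have e: "(- of_nat p - 1 :: complex) = - of_nat (Suc p)" by simp
    have "pochhammer (- of_nat p - 1 :: complex) N = 0"
      unfolding e by (rule pochhammer_of_nat_eq_0_lemma) (use Suc.prems in simp)
    then show ?thesis by (simp add: dH_def)
  qed
  also have "dH lam q p 0 = 0" by (simp add: dH_def)
  also have "(\<Sum>L<N. du lam q p L) = dF lam q p" using Suc.IH[OF N] .
  also have "drho lam q p * dF lam q p + (0 - 0) = dF lam q (Suc p)"
  proof -
    have h: "(1/2::complex) + of_nat p \<noteq> 0" by (rule half_shift_ne0)
    have K: "1 + lam + of_nat q + of_nat p \<noteq> 0"
      using nonpos_shift_ne0[OF assms, of "1 + q + p"] by (simp add: add_ac)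
    have e: "1 + lam + of_nat q = lam + of_nat (Suc q)" by simp
    have n1: "pochhammer (1 + lam + of_nat q) p \<noteq> 0" unfolding e by (rule poch_shift_ne0[OF assms])
    have n2: "pochhammer (1/2 :: complex) p \<noteq> 0" by (rule poch_half_ne0)
    define A1 where "A1 = pochhammer (1 + lam) p"
    define A2 where "A2 = pochhammer (1/2 + of_nat q :: complex) p"
    define A3 where "A3 = pochhammer (1/2 :: complex) p"
    define A4 where "A4 = pochhammer (1 + lam + of_nat q) p"
    have "A3 \<noteq> 0" "A4 \<noteq> 0" using n1 n2 by (simp_all add: A3_def A4_def)
    then show ?thesis
      unfolding dF_def drho_def pochhammer_Suc unfolding A1_def[symmetric] A2_def[symmetric] A3_def[symmetric] A4_def[symmetric]
      using h K by (simp add: field_simps)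
  qed
  finally show ?case .
qed


lemma fact_double_c: "(fact (2*L) :: complex) = 4^L * pochhammer (1/2) L * fact L"
proof -
  have "pochhammer (2 * (1/2::complex)) (2*L) = of_nat (2^(2*L)) * pochhammer (1/2) L * pochhammer (1/2 + 1/2) L"
    by (rule pochhammer_double)
  then show ?thesis by (simp add: pochhammer_fact power_mult)
qed

lemma poch2_double: "pochhammer (2*lam :: complex) (2*L) = 4^L * pochhammer lam L * pochhammer (lam + 1/2) L"
  using pochhammer_double[of lam L] by (simp add: power_mult)

lemma poch_4L:
  "pochhammer (2*lam :: complex) (2*L) * pochhammer (of_nat (2*L) + 2*lam) (2*L)
     = 16^L * pochhammer lam (2*L) * pochhammer (lam + 1/2) (2*L)"
proof -
  have "pochhammer (2*lam) (2*L + 2*L) = pochhammer (2*lam) (2*L) * pochhammer (2*lam + of_nat (2*L)) (2*L)"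
    by (rule pochhammer_product')
  moreover have "pochhammer (2*lam) (2*(2*L)) = of_nat (2^(2*(2*L))) * pochhammer lam (2*L) * pochhammer (lam + 1/2) (2*L)"
    by (rule pochhammer_double)
  moreover have "2*L + 2*L = 2*(2*L)" by simp
  moreover have "(of_nat (2^(2*(2*L))) :: complex) = 16^L" by (simp add: power_mult)
  ultimately show ?thesis by (simp add: add.commute)
qed

lemma poch_shift_join:
  "pochhammer (lam::complex) (2*L) * (of_nat (2*L) + lam) * pochhammer (of_nat (2*L) + lam + 1) i
     = lam * pochhammer (lam + 1) (L + i) * pochhammer (lam + 1 + of_nat (L + i)) L"
proof -
  have a: "pochhammer lam (2*L + Suc i) = pochhammer lam (2*L) * pochhammer (lam + of_nat (2*L)) (Suc i)"
    by (rule pochhammer_product')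
  have b: "pochhammer (lam + of_nat (2*L)) (Suc i) = (lam + of_nat (2*L)) * pochhammer (lam + of_nat (2*L) + 1) i"
    by (rule pochhammer_rec)
  have c: "pochhammer lam (Suc ((L + i) + L)) = lam * pochhammer (lam + 1) ((L + i) + L)"
    by (rule pochhammer_rec)
  have d: "pochhammer (lam + 1) ((L + i) + L) = pochhammer (lam + 1) (L + i) * pochhammer (lam + 1 + of_nat (L + i)) L"
    by (rule pochhammer_product')
  have e: "2*L + Suc i = Suc ((L + i) + L)" by simp
  have "pochhammer (lam::complex) (2*L) * (of_nat (2*L) + lam) * pochhammer (of_nat (2*L) + lam + 1) i
     = pochhammer lam (2*L) * pochhammer (lam + of_nat (2*L)) (Suc i)"
    unfolding b by (simp add: add.commute mult.assoc)
  also have "\<dots> = pochhammer lam (2*L + Suc i)" using a by simp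
  also have "\<dots> = pochhammer lam (Suc ((L + i) + L))" by (simp only: e)
  also have "\<dots> = lam * pochhammer (lam + 1) (L + i) * pochhammer (lam + 1 + of_nat (L + i)) L"
    using c d by simp
  finally show ?thesis .
qed

lemma poch_neg_fact:
  "pochhammer (- of_nat (L + i) :: complex) L * fact i = (-1)^L * fact (L + i)"
proof -
  have a: "pochhammer (- of_nat (L + i) :: complex) L = (-1)^L * pochhammer (of_nat (L + i) - of_nat L + 1) L"
    by (rule pochhammer_minus)
  have b: "(of_nat (L + i) - of_nat L + 1 :: complex) = 1 + of_nat i" by simp
  have c: "pochhammer (1::complex) (i + L) = pochhammer 1 i * pochhammer (1 + of_nat i) L"
    by (rule pochhammer_product')
  show ?thesis unfolding a b using c by (simp add: pochhammer_fact add.commute mult_ac)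
qed


definition phi0 :: "complex \<Rightarrow> nat \<Rightarrow> nat \<Rightarrow> nat \<Rightarrow> complex" where
 "phi0 lam L i j = lam * pochhammer (1/2) (L+i) * pochhammer (1/2) (L+j) * (pochhammer (lam + 1/2) (2*L))^2 * 16^L
   / (fact (2*L) * (of_nat (2*L) + lam) * pochhammer (2*lam) (2*L) * (pochhammer (of_nat (2*L) + 2*lam) (2*L))^2
      * pochhammer (of_nat (2*L) + lam + 1) i * pochhammer (of_nat (2*L) + lam + 1) j * (fact i * fact j) * 4^(i+j))"

definition Kc :: "complex \<Rightarrow> nat \<Rightarrow> nat \<Rightarrow> complex" where
 "Kc lam p q = pochhammer (1/2) p * pochhammer (1/2) q /
    (4^(p+q) * pochhammer (lam+1) p * pochhammer (lam+1) q * fact p * fact q)"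

lemma two_nonpos_imp:
  fixes lam :: complex
  assumes "2 * lam \<notin> \<int>\<^sub>\<le>\<^sub>0"
  shows "lam \<notin> \<int>\<^sub>\<le>\<^sub>0" "lam + 1/2 \<notin> \<int>\<^sub>\<le>\<^sub>0"
proof -
  show "lam \<notin> \<int>\<^sub>\<le>\<^sub>0"
  proof
    assume "lam \<in> \<int>\<^sub>\<le>\<^sub>0"
    then obtain n where "lam = - of_nat n" by (auto elim!: nonpos_Ints_cases')
    then have "2 * lam = - of_nat (2*n)" by simp
    then show False using assms by (metis minus_of_nat_in_nonpos_Ints)
  qed
  show "lam + 1/2 \<notin> \<int>\<^sub>\<le>\<^sub>0"
  proof
    assume "lam + 1/2 \<in> \<int>\<^sub>\<le>\<^sub>0"
    then obtain n where "lam + 1/2 = - of_nat n" by (auto elim!: nonpos_Ints_cases')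
    have "2 * lam = 2 * (lam + 1/2) - 1" by (simp add: algebra_simps)
    also have "\<dots> = - of_nat (2*n+1)" using \<open>lam + 1/2 = - of_nat n\<close> by simp
    finally have "2 * lam = - of_nat (2*n+1)" .
    then show False using assms by (metis minus_of_nat_in_nonpos_Ints)
  qed
qed

lemma phi0_eq:
  assumes "2 * lam \<notin> \<int>\<^sub>\<le>\<^sub>0"
  shows "phi0 lam L i j = Kc lam (L+i) (L+j) * du lam (L+j) (L+i) L"
proof -
  have lnp: "lam \<notin> \<int>\<^sub>\<le>\<^sub>0" using two_nonpos_imp[OF assms] by simp
  have hnp: "lam + 1/2 \<notin> \<int>\<^sub>\<le>\<^sub>0" using two_nonpos_imp[OF assms] by simp
  define A where "A = pochhammer lam L"
  define B where "B = pochhammer (lam + 1/2) L"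
  define C where "C = pochhammer (1/2::complex) L"
  define Lf where "Lf = (fact L :: complex)"
  define P2 where "P2 = pochhammer lam (2*L)"
  define Q2 where "Q2 = pochhammer (lam + 1/2) (2*L)"
  define X2 where "X2 = pochhammer (2*lam) (2*L)"
  define Y2 where "Y2 = pochhammer (of_nat (2*L) + 2*lam) (2*L)"
  define F2 where "F2 = (fact (2*L) :: complex)"
  define E where "E = of_nat (2*L) + lam"
  define Ii where "Ii = pochhammer (of_nat (2*L) + lam + 1) i"
  define Jj where "Jj = pochhammer (of_nat (2*L) + lam + 1) j"
  define lp where "lp = pochhammer (lam + 1) (L + i)"
  define lq where "lq = pochhammer (lam + 1) (L + j)"
  define Mp where "Mp = pochhammer (lam + 1 + of_nat (L + i)) L"
  define Mq where "Mq = pochhammer (lam + 1 + of_nat (L + j)) L"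
  define Np where "Np = pochhammer (- of_nat (L + i) :: complex) L"
  define Nq where "Nq = pochhammer (- of_nat (L + j) :: complex) L"
  define fp where "fp = (fact (L + i) :: complex)"
  define fq where "fq = (fact (L + j) :: complex)"
  define hp where "hp = pochhammer (1/2::complex) (L + i)"
  define hq where "hq = pochhammer (1/2::complex) (L + j)"
  have nzA: "A \<noteq> 0" unfolding A_def using poch_shift_ne0[OF lnp, of 0] by simp
  have nzB: "B \<noteq> 0" unfolding B_def using poch_shift_ne0[OF hnp, of 0] by simp
  have nzC: "C \<noteq> 0" unfolding C_def by (rule poch_half_ne0)
  have nzLf: "Lf \<noteq> 0" unfolding Lf_def by simp
  have nzP2: "P2 \<noteq> 0" unfolding P2_def using poch_shift_ne0[OF lnp, of 0] by simp
  have nzQ2: "Q2 \<noteq> 0" unfolding Q2_def using poch_shift_ne0[OF hnp, of 0] by simp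
  have nzX2: "X2 \<noteq> 0" unfolding X2_def using poch_shift_ne0[OF assms, of 0] by simp
  have nzE: "E \<noteq> 0" unfolding E_def using nonpos_shift_ne0[OF lnp, of "2*L"] by (simp add: add.commute)
  have e1: "lam + 1 + of_nat (L + i) = lam + of_nat (Suc (L + i))" "lam + 1 + of_nat (L + j) = lam + of_nat (Suc (L + j))"
     "lam + 1 = lam + of_nat 1" by simp_all
  have nzlp: "lp \<noteq> 0" unfolding lp_def e1(3) by (rule poch_shift_ne0[OF lnp])
  have nzlq: "lq \<noteq> 0" unfolding lq_def e1(3) by (rule poch_shift_ne0[OF lnp])
  have nzMp: "Mp \<noteq> 0" unfolding Mp_def e1(1) by (rule poch_shift_ne0[OF lnp])
  have nzMq: "Mq \<noteq> 0" unfolding Mq_def e1(2) by (rule poch_shift_ne0[OF lnp])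
  have nzfp: "fp \<noteq> 0" unfolding fp_def by simp
  have nzfq: "fq \<noteq> 0" unfolding fq_def by simp
  have rNp: "Np * fact i = (-1)^L * fp" unfolding Np_def fp_def by (rule poch_neg_fact)
  have rNq: "Nq * fact j = (-1)^L * fq" unfolding Nq_def fq_def by (rule poch_neg_fact)
  have nzNp: "Np \<noteq> 0" using rNp nzfp by auto
  have nzNq: "Nq \<noteq> 0" using rNq nzfq by auto
  have R1: "Y2 = 16^L * P2 * Q2 / X2"
  proof -
    have "X2 * Y2 = 16^L * P2 * Q2" unfolding X2_def Y2_def P2_def Q2_def by (rule poch_4L)
    then show ?thesis using nzX2 by (simp add: eq_divide_eq mult.commute)
  qed
  have R2: "X2 = 4^L * A * B" unfolding X2_def A_def B_def by (rule poch2_double)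
  have R3: "F2 = 4^L * C * Lf" unfolding F2_def C_def Lf_def by (rule fact_double_c)
  have R4: "Ii = lam * lp * Mp / (P2 * E)"
  proof -
    have "P2 * E * Ii = lam * lp * Mp" unfolding Ii_def lp_def Mp_def P2_def E_def by (rule poch_shift_join)
    then show ?thesis using nzP2 nzE by (simp add: eq_divide_eq mult.commute)
  qed
  have R5: "Jj = lam * lq * Mq / (P2 * E)"
  proof -
    have "P2 * E * Jj = lam * lq * Mq" unfolding Jj_def lq_def Mq_def P2_def E_def by (rule poch_shift_join)
    then show ?thesis using nzP2 nzE by (simp add: eq_divide_eq mult.commute)
  qed
  have R6: "(fact i * fact j :: complex) = fp * fq / (Np * Nq)"
  proof -
    have "(Np * fact i) * (Nq * fact j) = ((-1)^L * (-1)^L) * (fp * fq)" using rNp rNq by simp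
    also have "((-1::complex)^L * (-1)^L) = 1" by (simp flip: power_add) 
    finally show ?thesis using nzNp nzNq by (simp add: field_simps)
  qed
  have R7: "(4::complex)^(L + i + (L + j)) = 16^L * 4^(i+j)"
  proof -
    have "(4::complex)^(L + i + (L + j)) = (4^L * 4^L) * 4^(i+j)" by (simp add: power_add mult_ac)
    also have "(4::complex)^L * 4^L = 16^L" by (simp flip: power_mult_distrib)
    finally show ?thesis .
  qed
  have eE: "lam + 2 * of_nat L = E" unfolding E_def by simp
  have h16: "(16::complex)^L = 4^L * 4^L" by (simp flip: power_mult_distrib)
  have l0: "lam \<noteq> 0" using nonpos_shift_ne0[OF lnp, of 0] by simp
  show ?thesis
    unfolding phi0_def Kc_def du_def dr_def R6 R7
    unfolding Ii_def[symmetric] Jj_def[symmetric] Y2_def[symmetric]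
    unfolding A_def[symmetric] B_def[symmetric] C_def[symmetric] Lf_def[symmetric] P2_def[symmetric] Q2_def[symmetric]
      X2_def[symmetric] Y2_def[symmetric] F2_def[symmetric] E_def[symmetric] Ii_def[symmetric] Jj_def[symmetric]
      lp_def[symmetric] lq_def[symmetric] Mp_def[symmetric] Mq_def[symmetric] Np_def[symmetric] Nq_def[symmetric]
      fp_def[symmetric] fq_def[symmetric] hp_def[symmetric] hq_def[symmetric] eE
    unfolding R1 R4 R5 unfolding R2 R3 h16
    using nzA nzB nzC nzLf nzP2 nzQ2 nzE nzlp nzlq nzMp nzMq nzfp nzfq nzNp nzNq l0
    by (simp add: field_simps) (simp add: power2_eq_square mult_ac)
qed


definition E0 :: "complex \<Rightarrow> nat \<Rightarrow> nat \<Rightarrow> complex" where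
 "E0 lam p q = pochhammer (1/2) (p+q) / (4^(p+q) * pochhammer (lam+1) (p+q) * fact p * fact q)"

lemma Kc_dF:
  assumes "lam \<notin> \<int>\<^sub>\<le>\<^sub>0"
  shows "Kc lam p q * dF lam q p = E0 lam p q"
proof -
  have a: "pochhammer (1/2::complex) (q + p) = pochhammer (1/2) q * pochhammer (1/2 + of_nat q) p"
    by (rule pochhammer_product')
  have b: "pochhammer (lam + 1) (q + p) = pochhammer (lam + 1) q * pochhammer (lam + 1 + of_nat q) p"
    by (rule pochhammer_product')
  have c: "1 + lam = lam + 1" "1 + lam + of_nat q = lam + 1 + of_nat q" by simp_all
  have e1: "lam + 1 = lam + of_nat 1" by simp
  have e2: "lam + 1 + of_nat q = lam + of_nat (Suc q)" by simp
  have n1: "pochhammer (lam + 1) p \<noteq> 0" "pochhammer (lam + 1) q \<noteq> 0"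
    unfolding e1 by (rule poch_shift_ne0[OF assms])+
  have n1': "pochhammer (lam + 1 + of_nat q) p \<noteq> 0"
    unfolding e2 by (rule poch_shift_ne0[OF assms])
  have n2: "pochhammer (1/2::complex) p \<noteq> 0" by (rule poch_half_ne0)
  define A1 where "A1 = pochhammer (lam + 1) p"
  define A2 where "A2 = pochhammer (lam + 1) q"
  define A3 where "A3 = pochhammer (lam + 1 + of_nat q) p"
  define A4 where "A4 = pochhammer (1/2::complex) p"
  define A5 where "A5 = pochhammer (1/2::complex) q"
  define A6 where "A6 = pochhammer (1/2 + of_nat q :: complex) p"
  have "A1 \<noteq> 0" "A2 \<noteq> 0" "A3 \<noteq> 0" "A4 \<noteq> 0" using n1 n1' n2 by (simp_all add: A1_def A2_def A3_def A4_def)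
  then show ?thesis
    unfolding Kc_def dF_def E0_def c add.commute[of p q] a b
    unfolding A1_def[symmetric] A2_def[symmetric] A3_def[symmetric] A4_def[symmetric] A5_def[symmetric] A6_def[symmetric]
    by (simp add: field_simps)
qed

lemma du_zero_q:
  assumes "q < L"
  shows "du lam q p L = 0"
proof -
  have "pochhammer (- of_nat q :: complex) L = 0" by (rule pochhammer_of_nat_eq_0_lemma[OF assms])
  then show ?thesis by (simp add: du_def dr_def)
qed

lemma phi0_sum:
  assumes "2 * lam \<notin> \<int>\<^sub>\<le>\<^sub>0"
  shows "(\<Sum>L\<le>min p q. phi0 lam L (p - L) (q - L)) = E0 lam p q"
proof -
  have lnp: "lam \<notin> \<int>\<^sub>\<le>\<^sub>0" using two_nonpos_imp[OF assms] by simp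
  have "(\<Sum>L\<le>min p q. phi0 lam L (p - L) (q - L)) = (\<Sum>L\<le>min p q. Kc lam p q * du lam q p L)"
  proof (rule sum.cong)
    fix L assume "L \<in> {..min p q}"
    then have "L + (p - L) = p" "L + (q - L) = q" by auto
    then show "phi0 lam L (p - L) (q - L) = Kc lam p q * du lam q p L"
      using phi0_eq[OF assms, of L "p - L" "q - L"] by simp
  qed simp
  also have "\<dots> = Kc lam p q * (\<Sum>L\<le>min p q. du lam q p L)" by (simp add: sum_distrib_left)
  also have "(\<Sum>L\<le>min p q. du lam q p L) = (\<Sum>L<Suc p. du lam q p L)"
  proof (rule sum.mono_neutral_left)
    show "{..min p q} \<subseteq> {..<Suc p}" by auto
    show "\<forall>L\<in>{..<Suc p} - {..min p q}. du lam q p L = 0"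
    proof
      fix L assume "L \<in> {..<Suc p} - {..min p q}"
      then have "q < L" by auto
      then show "du lam q p L = 0" by (rule du_zero_q)
    qed
  qed simp
  also have "\<dots> = dF lam q p" by (rule dougall_sum[OF lnp]) simp
  also have "Kc lam p q * dF lam q p = E0 lam p q" by (rule Kc_dF[OF lnp])
  finally show ?thesis .
qed


lemma vander_aux:
  fixes mu nu :: complex
  assumes "\<And>p. pochhammer (mu+1) p \<noteq> 0" "\<And>p. pochhammer (nu+1) p \<noteq> 0"
  shows "(\<Sum>p\<le>n. of_nat (n choose p) * (pochhammer (mu+1) n / pochhammer (mu+1) p) *
           (pochhammer (nu+1) n / pochhammer (nu+1) (n-p)))
       = (\<Sum>p\<le>n. of_nat (n choose p) * pochhammer (mu+1+ of_nat p) (n-p) * pochhammer (nu+1+ of_nat (n-p)) p)"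
proof (rule sum.cong)
  fix p assume "p \<in> {..n}"
  then have pn: "p \<le> n" by simp
  have a: "pochhammer (mu+1) n = pochhammer (mu+1) p * pochhammer (mu+1+ of_nat p) (n-p)"
    by (rule pochhammer_product[OF pn])
  have b: "pochhammer (nu+1) n = pochhammer (nu+1) (n-p) * pochhammer (nu+1+ of_nat (n-p)) (n-(n-p))"
    by (rule pochhammer_product) simp
  have c: "n - (n - p) = p" using pn by simp
  show "of_nat (n choose p) * (pochhammer (mu+1) n / pochhammer (mu+1) p) *
           (pochhammer (nu+1) n / pochhammer (nu+1) (n-p))
        = of_nat (n choose p) * pochhammer (mu+1+ of_nat p) (n-p) * pochhammer (nu+1+ of_nat (n-p)) p"
    unfolding a using b c assms by simp
qed simp

lemma vander:
  fixes mu nu :: complex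
  shows "(\<Sum>p\<le>n. of_nat (n choose p) * pochhammer (mu+1+ of_nat p) (n-p) * pochhammer (nu+1+ of_nat (n-p)) p)
       = pochhammer (mu+nu+1+ of_nat n) n"
proof -
  have t: "of_nat (n choose p) * pochhammer (mu+1+ of_nat p) (n-p) * pochhammer (nu+1+ of_nat (n-p)) p
     = (-1)^n * (of_nat (n choose p) * pochhammer (-(nu + of_nat n)) p * pochhammer (-(mu + of_nat n)) (n-p))"
    if pn: "p \<le> n" for p
  proof -
    have e1: "mu+1+ of_nat p = (mu + of_nat n) - of_nat (n-p) + 1" using pn by (simp add: of_nat_diff)
    have e2: "nu+1+ of_nat (n-p) = (nu + of_nat n) - of_nat p + 1" using pn by (simp add: of_nat_diff)
    have s: "((-1)::complex)^(n-p) * (-1)^p = (-1)^n" using pn by (simp flip: power_add)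
    show ?thesis unfolding e1 e2 pochhammer_minus' using s by (simp add: mult_ac)
  qed
  have "(\<Sum>p\<le>n. of_nat (n choose p) * pochhammer (mu+1+ of_nat p) (n-p) * pochhammer (nu+1+ of_nat (n-p)) p)
     = (-1)^n * (\<Sum>p\<le>n. of_nat (n choose p) * pochhammer (-(nu + of_nat n)) p * pochhammer (-(mu + of_nat n)) (n-p))"
    unfolding sum_distrib_left by (rule sum.cong, simp, rule t, simp)
  also have "(\<Sum>p\<le>n. of_nat (n choose p) * pochhammer (-(nu + of_nat n)) p * pochhammer (-(mu + of_nat n)) (n-p))
     = pochhammer (-(nu + of_nat n) + -(mu + of_nat n)) n"
    by (rule pochhammer_binomial_sum[symmetric])
  also have "-(nu + of_nat n) + -(mu + of_nat n) = - (mu + nu + 2 * of_nat n)" by (simp add: algebra_simps)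
  also have "(-1)^n * pochhammer (- (mu + nu + 2 * of_nat n)) n = pochhammer ((mu + nu + 2 * of_nat n) - of_nat n + 1) n"
    by (rule pochhammer_minus'[symmetric])
  also have "(mu + nu + 2 * of_nat n) - of_nat n + 1 = mu+nu+1+ of_nat n" by (simp add: algebra_simps)
  finally show ?thesis .
qed

lemma lhs_coeff:
  fixes lam mu nu :: complex
  assumes "lam \<notin> \<int>\<^sub>\<le>\<^sub>0" "mu + 1 \<notin> \<int>\<^sub>\<le>\<^sub>0" "nu + 1 \<notin> \<int>\<^sub>\<le>\<^sub>0" "mu + nu + 1 \<notin> \<int>\<^sub>\<le>\<^sub>0"
  shows "(\<Sum>p\<le>n. E0 lam p (n-p) / (pochhammer (mu+1) p * pochhammer (nu+1) (n-p)))
     = pochhammer (1/2) n * (pochhammer (mu/2+nu/2+1/2) n * pochhammer (mu/2+nu/2+1) n)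
       / (pochhammer (lam+1) n * (pochhammer (mu+1) n * (pochhammer (nu+1) n * pochhammer (mu+nu+1) n))) / fact n"
proof -
  have nm: "pochhammer (mu+1) p \<noteq> 0" for p using poch_shift_ne0[OF assms(2), of 0] by simp
  have nn: "pochhammer (nu+1) p \<noteq> 0" for p using poch_shift_ne0[OF assms(3), of 0] by simp
  have nmn: "pochhammer (mu+nu+1) n \<noteq> 0" using poch_shift_ne0[OF assms(4), of 0] by simp
  have e1: "lam + 1 = lam + of_nat 1" by simp
  have nl: "pochhammer (lam+1) n \<noteq> 0" unfolding e1 by (rule poch_shift_ne0[OF assms(1)])
  define c where "c = pochhammer (1/2::complex) n / (4^n * pochhammer (lam+1) n * fact n * pochhammer (mu+1) n * pochhammer (nu+1) n)"
  have tm: "E0 lam p (n-p) / (pochhammer (mu+1) p * pochhammer (nu+1) (n-p))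
     = c * (of_nat (n choose p) * (pochhammer (mu+1) n / pochhammer (mu+1) p) *
           (pochhammer (nu+1) n / pochhammer (nu+1) (n-p)))" if pn: "p \<le> n" for p
  proof -
    have a: "p + (n - p) = n" using pn by simp
    have b: "(of_nat (n choose p) :: complex) = fact n / (fact p * fact (n-p))" using binomial_fact[OF pn] by simp
    define A where "A = pochhammer (mu+1) p"
    define B where "B = pochhammer (nu+1) (n-p)"
    define C where "C = pochhammer (mu+1) n"
    define D where "D = pochhammer (nu+1) n"
    define G where "G = pochhammer (lam+1) n"
    have "A \<noteq> 0" "B \<noteq> 0" "C \<noteq> 0" "D \<noteq> 0" "G \<noteq> 0" using nm nn nl by (simp_all add: A_def B_def C_def D_def G_def)
    then show ?thesis unfolding E0_def c_def a b
      unfolding A_def[symmetric] B_def[symmetric] C_def[symmetric] D_def[symmetric] G_def[symmetric]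
      by (simp add: field_simps)
  qed
  have "(\<Sum>p\<le>n. E0 lam p (n-p) / (pochhammer (mu+1) p * pochhammer (nu+1) (n-p)))
      = c * (\<Sum>p\<le>n. of_nat (n choose p) * (pochhammer (mu+1) n / pochhammer (mu+1) p) *
           (pochhammer (nu+1) n / pochhammer (nu+1) (n-p)))"
    unfolding sum_distrib_left by (rule sum.cong, simp, rule tm, simp)
  also have "\<dots> = c * pochhammer (mu+nu+1+ of_nat n) n"
    using vander_aux[OF nm nn] vander by simp
  also have "\<dots> = pochhammer (1/2) n * (pochhammer (mu/2+nu/2+1/2) n * pochhammer (mu/2+nu/2+1) n)
       / (pochhammer (lam+1) n * (pochhammer (mu+1) n * (pochhammer (nu+1) n * pochhammer (mu+nu+1) n))) / fact n"
  proof -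
    have d: "pochhammer (2 * (mu/2+nu/2+1/2)) (2*n) = of_nat (2^(2*n)) * pochhammer (mu/2+nu/2+1/2) n * pochhammer (mu/2+nu/2+1/2 + 1/2) n"
      by (rule pochhammer_double)
    have d3: "(of_nat (2^(2*n)) :: complex) = (2^2)^n" by (simp only: of_nat_power of_nat_numeral power_mult)
    have d2: "2 * (mu/2+nu/2+1/2) = mu+nu+1" "mu/2+nu/2+1/2 + 1/2 = mu/2+nu/2+1" "(of_nat (2^(2*n)) :: complex) = 4^n"
      using d3 by (simp_all add: field_simps)
    have pr: "pochhammer (mu+nu+1) (n + n) = pochhammer (mu+nu+1) n * pochhammer (mu+nu+1+ of_nat n) n"
      by (rule pochhammer_product')
    have "pochhammer (mu/2+nu/2+1/2) n * pochhammer (mu/2+nu/2+1) n = pochhammer (mu+nu+1) n * pochhammer (mu+nu+1+ of_nat n) n / 4^n"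
      using d unfolding d2 unfolding mult_2[of n] pr by (simp add: field_simps)
    then show ?thesis unfolding c_def using nmn nl nm nn by (simp add: field_simps)
  qed
  finally show ?thesis .
qed


definition cT0 :: "complex \<Rightarrow> complex \<Rightarrow> complex \<Rightarrow> complex \<Rightarrow> nat \<Rightarrow> complex" where
 "cT0 lam \<mu> \<nu> k L = (-1) ^ (2*L) * k ^ (4*L) * (pochhammer (lam + 1/2) (2*L))\<^sup>2 * Gamma (of_nat (2*L) + 2*lam)
      * 2 powr (of_nat (4*L) - 2*lam - \<mu> - \<nu> + 1)
      / (fact (2*L) * (of_nat (2*L) + lam) * (pochhammer (2*lam) (2*L))\<^sup>2
         * (pochhammer (of_nat (2*L) + 2*lam) (2*L))\<^sup>2
         * gpoch (of_nat L + 1/2) (\<mu> + 1/2) * gpoch (of_nat L + 1/2) (\<nu> + 1/2))"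

definition cc0 :: "complex \<Rightarrow> complex \<Rightarrow> complex \<Rightarrow> complex" where
 "cc0 lam \<mu> \<nu> = Gamma (lam + 1) * 2 powr (\<mu> + \<nu>) * Gamma (\<mu> + 1) * Gamma (\<nu> + 1)
      / (of_real (sqrt pi) * Gamma (lam + 1/2) * (Gamma lam)\<^sup>2)"

definition aterm :: "complex \<Rightarrow> complex \<Rightarrow> complex \<Rightarrow> nat \<Rightarrow> nat \<Rightarrow> complex" where
 "aterm lam \<mu> k L i = pochhammer (of_nat L + 1/2) i / (pochhammer (of_nat (2*L) + lam + 1) i * pochhammer (of_nat L + \<mu> + 1) i)
      * (- k\<^sup>2 / 4) ^ i / fact i"

lemma two_powr_c: "(2::complex) powr x = exp (x * of_real (ln 2))"
proof -
  have "ln (2::complex) = of_real (ln 2)" using Ln_of_real[of 2] by simp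
  then show ?thesis by (simp add: powr_def)
qed

lemma Gamma_shift:
  fixes z :: complex
  assumes "z \<notin> \<int>\<^sub>\<le>\<^sub>0"
  shows "Gamma (z + of_nat n) = Gamma z * pochhammer z n"
  using pochhammer_Gamma[OF assms, of n] Gamma_nonzero[OF assms] by (simp add: field_simps)

lemma gpoch_eq:
  fixes \<mu> :: complex
  assumes "\<mu> + 1 \<notin> \<int>\<^sub>\<le>\<^sub>0"
  shows "gpoch (of_nat L + 1/2) (\<mu> + 1/2) = Gamma (\<mu> + 1) * pochhammer (\<mu> + 1) L / (of_real (sqrt pi) * pochhammer (1/2) L)"
proof -
  have h: "(1/2::complex) \<notin> \<int>\<^sub>\<le>\<^sub>0"
    using fraction_not_in_Ints[where 'a=complex, of 2 1] nonpos_Ints_subset_Ints by auto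
  have a: "of_nat L + 1/2 + (\<mu> + 1/2) = (\<mu> + 1) + of_nat L" by (simp add: algebra_simps)
  have b: "of_nat L + 1/2 = (1/2::complex) + of_nat L" by (simp add: algebra_simps)
  show ?thesis unfolding gpoch_def a unfolding b unfolding Gamma_shift[OF assms] Gamma_shift[OF h] Gamma_one_half_complex
    by simp
qed


lemma exp_ln2_c: "exp (of_real (ln 2) :: complex) = 2"
  by (simp flip: of_real_exp)

lemma termC:
  fixes lam \<mu> \<nu> k :: complex
  assumes a2: "2*lam \<notin> \<int>\<^sub>\<le>\<^sub>0" and am: "\<mu>+1 \<notin> \<int>\<^sub>\<le>\<^sub>0" and an: "\<nu>+1 \<notin> \<int>\<^sub>\<le>\<^sub>0"
  shows "cc0 lam \<mu> \<nu> * cT0 lam \<mu> \<nu> k L * aterm lam \<mu> k L i * aterm lam \<nu> k L j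
     = (-k\<^sup>2)^(2*L+i+j) * phi0 lam L i j / (pochhammer (\<mu>+1) (L+i) * pochhammer (\<nu>+1) (L+j))"
proof -
  have lnp: "lam \<notin> \<int>\<^sub>\<le>\<^sub>0" and hnp: "lam + 1/2 \<notin> \<int>\<^sub>\<le>\<^sub>0" using two_nonpos_imp[OF a2] by simp_all
  define l2 where "l2 = (of_real (ln 2) :: complex)"
  define eps where "eps = exp (-(2*lam) * l2)"
  define U where "U = exp ((\<mu>+\<nu>) * l2)"
  define S where "S = (of_real (sqrt pi) :: complex)"
  define Gl where "Gl = Gamma lam"
  define G2 where "G2 = Gamma (2*lam)"
  define Gm where "Gm = Gamma (\<mu>+1)"
  define Gn where "Gn = Gamma (\<nu>+1)"
  have el2: "exp l2 = 2" unfolding l2_def by (rule exp_ln2_c)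
  have fp1: "(2::complex) powr (\<mu>+\<nu>) = U" unfolding U_def l2_def by (rule two_powr_c)
  have fp2: "(2::complex) powr (of_nat (4*L) - 2*lam - \<mu> - \<nu> + 1) = 16^L * 2 * eps / U"
  proof -
    have "(of_nat (4*L) - 2*lam - \<mu> - \<nu> + 1) * l2 = of_nat (4*L) * l2 + l2 + (-(2*lam) * l2) - (\<mu>+\<nu>) * l2"
      by (simp add: algebra_simps)
    then have "(2::complex) powr (of_nat (4*L) - 2*lam - \<mu> - \<nu> + 1) = exp (of_nat (4*L) * l2) * exp l2 * eps / U"
      unfolding two_powr_c l2_def[symmetric] eps_def U_def by (simp add: exp_add exp_diff exp_minus field_simps)
    also have "exp (of_nat (4*L) * l2) = (16::complex)^L"
      unfolding exp_of_nat_mult el2 by (simp add: power_mult)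
    finally show ?thesis unfolding el2 by simp
  qed
  have fdup: "Gamma (lam + 1/2) = 2 * eps * S * G2 / Gl"
  proof -
    have "Gamma lam * Gamma (lam + 1/2) = exp ((1 - 2*lam) * of_real (ln 2)) * of_real (sqrt pi) * Gamma (2*lam)"
      by (rule Gamma_legendre_duplication[OF lnp hnp])
    moreover have "exp ((1 - 2*lam) * l2) = 2 * eps"
    proof -
      have "(1 - 2*lam) * l2 = l2 + (-(2*lam) * l2)" by (simp add: algebra_simps)
      then have "exp ((1 - 2*lam) * l2) = exp l2 * exp (-(2*lam) * l2)" by (simp only: exp_add)
      then show ?thesis unfolding el2 eps_def .
    qed
    moreover have "Gl \<noteq> 0" unfolding Gl_def by (rule Gamma_nonzero[OF lnp])
    ultimately show ?thesis unfolding l2_def[symmetric] S_def[symmetric] G2_def[symmetric] Gl_def[symmetric]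
      by (simp add: field_simps)
  qed
  have fG1: "Gamma (of_nat (2*L) + 2*lam) = G2 * pochhammer (2*lam) (2*L)"
    unfolding G2_def using Gamma_shift[OF a2, of "2*L"] by (simp add: add.commute)
  have fGp: "Gamma (lam + 1) = lam * Gl" unfolding Gl_def by (rule Gamma_plus1[OF lnp])
  have fgm: "gpoch (of_nat L + 1/2) (\<mu> + 1/2) = Gm * pochhammer (\<mu> + 1) L / (S * pochhammer (1/2) L)"
    unfolding Gm_def S_def by (rule gpoch_eq[OF am])
  have fgn: "gpoch (of_nat L + 1/2) (\<nu> + 1/2) = Gn * pochhammer (\<nu> + 1) L / (S * pochhammer (1/2) L)"
    unfolding Gn_def S_def by (rule gpoch_eq[OF an])
  have fh: "pochhammer (1/2::complex) (L+i) = pochhammer (1/2) L * pochhammer (of_nat L + 1/2) i"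
    "pochhammer (1/2::complex) (L+j) = pochhammer (1/2) L * pochhammer (of_nat L + 1/2) j"
    by (simp_all add: pochhammer_product' add.commute)
  have fm: "pochhammer (\<mu>+1) (L+i) = pochhammer (\<mu>+1) L * pochhammer (of_nat L + \<mu> + 1) i"
    "pochhammer (\<nu>+1) (L+j) = pochhammer (\<nu>+1) L * pochhammer (of_nat L + \<nu> + 1) j"
    by (simp_all add: pochhammer_product' add_ac)
  have fz: "(-k\<^sup>2)^(2*L+i+j) = k^(4*L) * (-k\<^sup>2)^i * (-k\<^sup>2)^j"
  proof -
    have "(-k\<^sup>2)^(2*L) = k^(4*L)" by (simp add: power_mult power_mult_distrib flip: power_mult)
    then show ?thesis by (simp add: power_add)
  qed
  have fw: "(- k\<^sup>2 / 4) ^ i = (-k\<^sup>2)^i / 4^i" "(- k\<^sup>2 / 4) ^ j = (-k\<^sup>2)^j / 4^j"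
    by (simp_all only: power_divide)
  have f4: "(4::complex)^(i+j) = 4^i * 4^j" by (simp add: power_add)
  have f1: "(-1::complex) ^ (2*L) = 1" by simp
  have nGl: "Gl \<noteq> 0" unfolding Gl_def by (rule Gamma_nonzero[OF lnp])
  have nG2: "G2 \<noteq> 0" unfolding G2_def by (rule Gamma_nonzero[OF a2])
  have nGm: "Gm \<noteq> 0" unfolding Gm_def by (rule Gamma_nonzero[OF am])
  have nGn: "Gn \<noteq> 0" unfolding Gn_def by (rule Gamma_nonzero[OF an])
  have nS: "S \<noteq> 0" unfolding S_def by simp
  have neps: "eps \<noteq> 0" unfolding eps_def by simp
  have nU: "U \<noteq> 0" unfolding U_def by simp
  have nl: "lam \<noteq> 0" using nonpos_shift_ne0[OF lnp, of 0] by simp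
  define C where "C = pochhammer (1/2::complex) L"
  define Mm where "Mm = pochhammer (\<mu>+1) L"
  define Mn where "Mn = pochhammer (\<nu>+1) L"
  define X2 where "X2 = pochhammer (2*lam) (2*L)"
  define Y2 where "Y2 = pochhammer (of_nat (2*L) + 2*lam) (2*L)"
  define Q2 where "Q2 = pochhammer (lam + 1/2) (2*L)"
  define F2 where "F2 = (fact (2*L) :: complex)"
  define E where "E = of_nat (2*L) + lam"
  define Ii where "Ii = pochhammer (of_nat (2*L) + lam + 1) i"
  define Jj where "Jj = pochhammer (of_nat (2*L) + lam + 1) j"
  define mi where "mi = pochhammer (of_nat L + \<mu> + 1) i"
  define nj where "nj = pochhammer (of_nat L + \<nu> + 1) j"
  define hi where "hi = pochhammer (of_nat L + 1/2 :: complex) i"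
  define hj where "hj = pochhammer (of_nat L + 1/2 :: complex) j"
  define fi where "fi = (fact i :: complex)"
  define fj where "fj = (fact j :: complex)"
  define K4 where "K4 = k^(4*L)"
  define Zi where "Zi = (-k\<^sup>2)^i"
  define Zj where "Zj = (-k\<^sup>2)^j"
  have nC: "C \<noteq> 0" unfolding C_def by (rule poch_half_ne0)
  have nMm: "Mm \<noteq> 0" unfolding Mm_def using poch_shift_ne0[OF am, of 0] by simp
  have nMn: "Mn \<noteq> 0" unfolding Mn_def using poch_shift_ne0[OF an, of 0] by simp
  have nX2: "X2 \<noteq> 0" unfolding X2_def using poch_shift_ne0[OF a2, of 0] by simp
  have nY2: "Y2 \<noteq> 0" unfolding Y2_def using poch_shift_ne0[OF a2, of "2*L"] by (simp add: add.commute)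
  have nF2: "F2 \<noteq> 0" unfolding F2_def by simp
  have nE: "E \<noteq> 0" unfolding E_def using nonpos_shift_ne0[OF lnp, of "2*L"] by (simp add: add.commute)
  have eI: "of_nat (2*L) + lam + 1 = lam + of_nat (2*L+1)" by simp
  have nIi: "Ii \<noteq> 0" unfolding Ii_def eI by (rule poch_shift_ne0[OF lnp])
  have nJj: "Jj \<noteq> 0" unfolding Jj_def eI by (rule poch_shift_ne0[OF lnp])
  have em: "of_nat L + \<mu> + 1 = (\<mu> + 1) + of_nat L" "of_nat L + \<nu> + 1 = (\<nu> + 1) + of_nat L" by (simp_all add: add_ac)
  have nmi: "mi \<noteq> 0" unfolding mi_def em by (rule poch_shift_ne0[OF am])
  have nnj: "nj \<noteq> 0" unfolding nj_def em by (rule poch_shift_ne0[OF an])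
  have nfi: "fi \<noteq> 0" "fj \<noteq> 0" unfolding fi_def fj_def by simp_all
  show ?thesis
    unfolding cc0_def cT0_def aterm_def phi0_def
    unfolding fp1 fp2 fdup fG1 fGp fgm fgn fh fm fz fw f4 f1
    unfolding Gl_def[symmetric] G2_def[symmetric] Gm_def[symmetric] Gn_def[symmetric] S_def[symmetric]
    unfolding C_def[symmetric] Mm_def[symmetric] Mn_def[symmetric] X2_def[symmetric] Y2_def[symmetric] Q2_def[symmetric]
      F2_def[symmetric] Ii_def[symmetric] Jj_def[symmetric] mi_def[symmetric] nj_def[symmetric] hi_def[symmetric]
      hj_def[symmetric] fi_def[symmetric] fj_def[symmetric] K4_def[symmetric] Zi_def[symmetric] Zj_def[symmetric]
    unfolding E_def[symmetric]
    using nGl nG2 nGm nGn nS neps nU nl nC nMm nMn nX2 nY2 nF2 nE nIi nJj nmi nnj nfi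
    by (simp add: field_simps) (simp add: power2_eq_square)
qed


lemma prod_summable_on:
  fixes f :: "'a \<Rightarrow> real" and g :: "'b \<Rightarrow> real"
  assumes f0: "\<And>x. f x \<ge> 0" and g0: "\<And>y. g y \<ge> 0"
    and fs: "f summable_on UNIV" and gs: "g summable_on UNIV"
  shows "(\<lambda>(x,y). f x * g y) summable_on UNIV"
proof (rule nonneg_bdd_above_summable_on)
  show "\<And>z. z \<in> UNIV \<Longrightarrow> 0 \<le> (\<lambda>(x,y). f x * g y) z" using f0 g0 by auto
  show "bdd_above (sum (\<lambda>(x,y). f x * g y) ` {F. F \<subseteq> UNIV \<and> finite F})"
  proof (rule bdd_aboveI2)
    fix F :: "('a \<times> 'b) set" assume "F \<in> {F. F \<subseteq> UNIV \<and> finite F}"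
    then have fin: "finite F" by simp
    have "sum (\<lambda>(x,y). f x * g y) F \<le> sum (\<lambda>(x,y). f x * g y) (fst ` F \<times> snd ` F)"
    proof (rule sum_mono2)
      show "finite (fst ` F \<times> snd ` F)" using fin by simp
      show "F \<subseteq> fst ` F \<times> snd ` F" by force
      show "\<And>b. b \<in> fst ` F \<times> snd ` F - F \<Longrightarrow> 0 \<le> (\<lambda>(x, y). f x * g y) b"
        using f0 g0 by (auto intro: mult_nonneg_nonneg)
    qed
    also have "\<dots> = sum f (fst ` F) * sum g (snd ` F)"
      by (simp add: sum_product sum.cartesian_product)
    also have "\<dots> \<le> infsum f UNIV * infsum g UNIV"
    proof (rule mult_mono)
      show "sum f (fst ` F) \<le> infsum f UNIV" by (rule finite_sum_le_infsum[OF fs]) (use fin f0 in auto)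
      show "sum g (snd ` F) \<le> infsum g UNIV" by (rule finite_sum_le_infsum[OF gs]) (use fin g0 in auto)
      show "0 \<le> infsum f UNIV" using f0 by (simp add: infsum_nonneg)
      show "0 \<le> sum g (snd ` F)" using g0 by (simp add: sum_nonneg)
    qed
    finally show "sum (\<lambda>(x,y). f x * g y) F \<le> infsum f UNIV * infsum g UNIV" .
  qed
qed

lemma exp_series_summable_on:
  fixes x :: real
  shows "(\<lambda>n. x^n / fact n) summable_on UNIV"
proof -
  have "summable (\<lambda>n. norm (x^n / fact n))"
    using summable_exp[of "norm x"] by (simp add: field_simps norm_power norm_divide power_abs)
  then show ?thesis by (rule norm_summable_imp_summable_on)
qed

lemma delta_exists:
  fixes c :: complex
  assumes "c \<notin> \<int>\<^sub>\<le>\<^sub>0"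
  shows "\<exists>d>0. \<forall>m::nat. d * (of_nat m + 1) \<le> norm (c + of_nat m)"
proof -
  define N where "N = nat (ceiling (2 * norm c))"
  have fin: "\<exists>d>0. \<forall>m\<le>K. d * (of_nat m + 1) \<le> norm (c + of_nat m)" for K
  proof (induction K)
    case 0
    have "norm c > 0" using nonpos_shift_ne0[OF assms, of 0] by simp
    then show ?case by (intro exI[of _ "norm c"]) auto
  next
    case (Suc K)
    then obtain d where d: "d > 0" "\<forall>m\<le>K. d * (of_nat m + 1) \<le> norm (c + of_nat m)" by blast
    define e where "e = norm (c + of_nat (Suc K)) / (of_nat (Suc K) + 1)"
    have "c + of_nat (Suc K) \<noteq> 0" by (rule nonpos_shift_ne0[OF assms])
    then have e0: "e > 0" unfolding e_def by simp
    have "min d e * (of_nat m + 1) \<le> norm (c + of_nat m)" if "m \<le> Suc K" for m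
    proof (cases "m = Suc K")
      case True
      have "min d e * (of_nat m + 1) \<le> e * (of_nat m + 1)" by (intro mult_right_mono) auto
      also have "\<dots> = norm (c + of_nat m)" using True unfolding e_def by (simp add: field_simps)
      finally show ?thesis .
    next
      case False
      then have "m \<le> K" using that by simp
      have "min d e * (of_nat m + 1) \<le> d * (of_nat m + 1)" by (intro mult_right_mono) auto
      also have "\<dots> \<le> norm (c + of_nat m)" using d \<open>m \<le> K\<close> by blast
      finally show ?thesis .
    qed
    then show ?case using d e0 by (intro exI[of _ "min d e"]) auto
  qed
  obtain d where d: "d > 0" "\<forall>m\<le>N. d * (of_nat m + 1) \<le> norm (c + of_nat m)" using fin by blast
  have "min d (1/4) * (of_nat m + 1) \<le> norm (c + of_nat m)" for m
  proof (cases "m \<le> N")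
    case True
    have "min d (1/4) * (of_nat m + 1) \<le> d * (of_nat m + 1)" by (intro mult_right_mono) auto
    also have "\<dots> \<le> norm (c + of_nat m)" using d True by blast
    finally show ?thesis .
  next
    case False
    then have mN: "real m > 2 * norm c" "m \<ge> 1" unfolding N_def by linarith+
    have "norm (c + of_nat m) \<ge> norm (of_nat m :: complex) - norm c" by (metis norm_diff_ineq add.commute)
    then have "norm (c + of_nat m) \<ge> real m - norm c" by simp
    moreover have "real m \<ge> 1" using mN(2) by simp
    ultimately have "real m + 1 \<le> 4 * norm (c + of_nat m)" using mN(1) by linarith
    then have h1: "norm (c + of_nat m) \<ge> 1/4 * (real m + 1)" by simp
    have h2: "min d (1/4) * (of_nat m + 1) \<le> 1/4 * (real m + 1)" by (intro mult_right_mono) auto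
    from h1 h2 show ?thesis by linarith
  qed
  then show ?thesis using d by (intro exI[of _ "min d (1/4)"]) auto
qed

lemma poch_lower:
  fixes c :: complex
  assumes d0: "d \<ge> 0" and d: "\<forall>m::nat. d * (of_nat m + 1) \<le> norm (c + of_nat m)"
  shows "d^n * fact n \<le> norm (pochhammer (c + of_nat s) n)"
proof (induction n)
  case 0
  then show ?case by simp
next
  case (Suc n)
  have "d * (of_nat (s + n) + 1) \<le> norm (c + of_nat (s + n))" using d by blast
  moreover have "d * (of_nat n + 1) \<le> d * (of_nat (s + n) + 1)" using d0 by (intro mult_left_mono) auto
  ultimately have a: "d * (of_nat n + 1) \<le> norm (c + of_nat s + of_nat n)" by (simp add: add.assoc)
  have "d^(Suc n) * fact (Suc n) = (d^n * fact n) * (d * (of_nat n + 1))" by (simp add: algebra_simps)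
  also have "\<dots> \<le> norm (pochhammer (c + of_nat s) n) * norm (c + of_nat s + of_nat n)"
    by (rule mult_mono[OF Suc.IH a]) (use d0 in auto)
  also have "\<dots> = norm (pochhammer (c + of_nat s) (Suc n))" by (simp add: pochhammer_Suc norm_mult)
  finally show ?case .
qed

lemma poch_upper:
  fixes a :: complex
  shows "norm (pochhammer a n) \<le> (norm a + 1)^n * fact n"
proof (induction n)
  case 0
  then show ?case by simp
next
  case (Suc n)
  have b: "norm (a + of_nat n) \<le> (norm a + 1) * (of_nat n + 1)"
  proof -
    have "norm (a + of_nat n) \<le> norm a + of_nat n" by (metis norm_triangle_ineq norm_of_nat)
    also have "\<dots> \<le> (norm a + 1) * (of_nat n + 1)" by (simp add: algebra_simps)
    finally show ?thesis .
  qed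
  have "norm (pochhammer a (Suc n)) = norm (pochhammer a n) * norm (a + of_nat n)" by (simp add: pochhammer_Suc norm_mult)
  also have "\<dots> \<le> ((norm a + 1)^n * fact n) * ((norm a + 1) * (of_nat n + 1))"
    by (rule mult_mono[OF Suc.IH b]) auto
  also have "\<dots> = (norm a + 1)^(Suc n) * fact (Suc n)" by (simp add: algebra_simps)
  finally show ?case .
qed


lemma B_bound:
  fixes lam c z :: complex
  assumes dl0: "dl > 0" and hdl: "\<forall>m::nat. dl * (of_nat m + 1) \<le> norm (lam + of_nat m)"
    and dc0: "dc > 0" and hdc: "\<forall>m::nat. dc * (of_nat m + 1) \<le> norm ((c + 1) + of_nat m)"
  shows "norm (z^i * pochhammer (1/2) (L+i) / (pochhammer (of_nat (2*L) + lam + 1) i * fact i * 4^i * pochhammer (c+1) (L+i)))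
     \<le> (3/(2*dc))^L * (3 * norm z / (8*dl*dc))^i / fact i"
proof -
  have h: "norm (pochhammer (1/2::complex) (L+i)) \<le> (3/2)^(L+i) * fact (L+i)"
    using poch_upper[of "1/2::complex" "L+i"] by simp
  have m: "dc^(L+i) * fact (L+i) \<le> norm (pochhammer (c+1) (L+i))"
    using poch_lower[of dc "c+1" "L+i" 0] dc0 hdc by simp
  have e: "of_nat (2*L) + lam + 1 = lam + of_nat (2*L+1)" by simp
  have I: "dl^i * fact i \<le> norm (pochhammer (of_nat (2*L) + lam + 1) i)"
    unfolding e using poch_lower[of dl lam i "2*L+1"] dl0 hdl by simp
  have pos1: "0 < dl^i * fact i * fact i * 4^i * (dc^(L+i) * fact (L+i))" using dl0 dc0 by simp
  have "norm (z^i * pochhammer (1/2) (L+i) / (pochhammer (of_nat (2*L) + lam + 1) i * fact i * 4^i * pochhammer (c+1) (L+i)))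
      = norm z^i * norm (pochhammer (1/2::complex) (L+i)) /
        (norm (pochhammer (of_nat (2*L) + lam + 1) i) * fact i * 4^i * norm (pochhammer (c+1) (L+i)))"
    by (simp add: norm_mult norm_divide norm_power norm_fact)
  also have "\<dots> \<le> norm z^i * ((3/2)^(L+i) * fact (L+i)) / (dl^i * fact i * fact i * 4^i * (dc^(L+i) * fact (L+i)))"
  proof (rule frac_le)
    show "0 \<le> norm z^i * ((3/2)^(L+i) * fact (L+i))" by simp
    show "norm z^i * norm (pochhammer (1/2::complex) (L+i)) \<le> norm z^i * ((3/2)^(L+i) * fact (L+i))"
      by (rule mult_left_mono[OF h]) simp
    show "0 < dl^i * fact i * fact i * 4^i * (dc^(L+i) * fact (L+i))" by (rule pos1)
    show "dl^i * fact i * fact i * 4^i * (dc^(L+i) * fact (L+i)) \<le>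
        norm (pochhammer (of_nat (2*L) + lam + 1) i) * fact i * 4^i * norm (pochhammer (c+1) (L+i))"
      by (intro mult_mono I m) (use dl0 dc0 in auto)
  qed
  also have "\<dots> = (3/(2*dc))^L * (3 * norm z / (8*dl*dc))^i / (fact i * fact i)"
  proof -
    have a: "(3/2::real)^(L+i) = 3^L * 3^i / (2^L * 2^i)" by (simp add: power_add power_divide)
    have b: "(3/(2*dc))^L = 3^L / (2^L * dc^L)" by (simp add: power_divide power_mult_distrib)
    have c: "(3 * norm z / (8*dl*dc))^i = 3^i * norm z^i / (2^i * 4^i * dl^i * dc^i)"
    proof -
      have "(8::real)^i = 2^i * 4^i" by (simp flip: power_mult_distrib)
      then show ?thesis by (simp add: power_divide power_mult_distrib)
    qed
    have d: "dc^(L+i) = dc^L * dc^i" by (simp add: power_add)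
    show ?thesis unfolding a b c d using dl0 dc0 by (simp add: field_simps)
  qed
  also have "\<dots> \<le> (3/(2*dc))^L * (3 * norm z / (8*dl*dc))^i / fact i"
  proof -
    have "(1::real) \<le> fact i" by simp
    then have "fact i * 1 \<le> (fact i * fact i :: real)" by (intro mult_left_mono) auto
    then have "fact i \<le> (fact i * fact i :: real)" by simp
    then show ?thesis using dl0 dc0 by (intro divide_left_mono) auto
  qed
  finally show ?thesis .
qed


lemma A_bound:
  fixes lam z :: complex
  assumes dl0: "dl > 0" and hdl: "\<forall>m::nat. dl * (of_nat m + 1) \<le> norm (lam + of_nat m)"
    and d20: "d2 > 0" and hd2: "\<forall>m::nat. d2 * (of_nat m + 1) \<le> norm (2*lam + of_nat m)"
  shows "norm (lam * (pochhammer (lam + 1/2) (2*L))\<^sup>2 * 16^L * z^(2*L) /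
           (fact (2*L) * (of_nat (2*L) + lam) * pochhammer (2*lam) (2*L) * (pochhammer (of_nat (2*L) + 2*lam) (2*L))\<^sup>2))
     \<le> (norm lam / dl) * ((norm (lam + 1/2) + 1)^4 * 16 * norm z ^ 2 / d2^6)^L / fact L"
proof -
  define c1 where "c1 = norm (lam + 1/2) + 1"
  have c1: "c1 \<ge> 1" unfolding c1_def by simp
  have Q: "norm (pochhammer (lam + 1/2) (2*L)) \<le> c1^(2*L) * fact (2*L)"
    unfolding c1_def by (rule poch_upper)
  have E: "dl \<le> norm (of_nat (2*L) + lam)"
  proof -
    have "dl * (of_nat (2*L) + 1) \<le> norm (lam + of_nat (2*L))" using hdl by blast
    moreover have "dl \<le> dl * (of_nat (2*L) + 1)" using dl0 by simp
    ultimately show ?thesis by (simp add: add.commute)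
  qed
  have X: "d2^(2*L) * fact (2*L) \<le> norm (pochhammer (2*lam) (2*L))"
    using poch_lower[of d2 "2*lam" "2*L" 0] d20 hd2 by simp
  have Y: "d2^(2*L) * fact (2*L) \<le> norm (pochhammer (of_nat (2*L) + 2*lam) (2*L))"
    using poch_lower[of d2 "2*lam" "2*L" "2*L"] d20 hd2 by (simp add: add.commute)
  have "norm (lam * (pochhammer (lam + 1/2) (2*L))\<^sup>2 * 16^L * z^(2*L) /
           (fact (2*L) * (of_nat (2*L) + lam) * pochhammer (2*lam) (2*L) * (pochhammer (of_nat (2*L) + 2*lam) (2*L))\<^sup>2))
      = norm lam * (norm (pochhammer (lam + 1/2) (2*L)))\<^sup>2 * 16^L * norm z^(2*L) /
           (fact (2*L) * norm (of_nat (2*L) + lam) * norm (pochhammer (2*lam) (2*L)) * (norm (pochhammer (of_nat (2*L) + 2*lam) (2*L)))\<^sup>2)"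
    by (simp add: norm_mult norm_divide norm_power norm_fact)
  also have "\<dots> \<le> norm lam * (c1^(2*L) * fact (2*L))\<^sup>2 * 16^L * norm z^(2*L) /
           (fact (2*L) * dl * (d2^(2*L) * fact (2*L)) * (d2^(2*L) * fact (2*L))\<^sup>2)"
  proof (rule frac_le)
    show "0 \<le> norm lam * (c1^(2*L) * fact (2*L))\<^sup>2 * 16^L * norm z^(2*L)" by simp
    show "norm lam * (norm (pochhammer (lam + 1/2) (2*L)))\<^sup>2 * 16^L * norm z^(2*L)
        \<le> norm lam * (c1^(2*L) * fact (2*L))\<^sup>2 * 16^L * norm z^(2*L)"
      by (intro mult_right_mono mult_left_mono power_mono Q) auto
    show "0 < fact (2*L) * dl * (d2^(2*L) * fact (2*L)) * (d2^(2*L) * fact (2*L))\<^sup>2" using dl0 d20 by simp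
    show "fact (2*L) * dl * (d2^(2*L) * fact (2*L)) * (d2^(2*L) * fact (2*L))\<^sup>2
        \<le> fact (2*L) * norm (of_nat (2*L) + lam) * norm (pochhammer (2*lam) (2*L)) * (norm (pochhammer (of_nat (2*L) + 2*lam) (2*L)))\<^sup>2"
      by (intro mult_mono power_mono E X Y) (use dl0 d20 in auto)
  qed
  also have "\<dots> = (norm lam / dl) * (c1^4 * 16 * norm z ^ 2 / d2^6)^L / (fact (2*L) * fact (2*L))"
  proof -
    have a: "(c1^4 * 16 * norm z ^ 2 / d2^6)^L = c1^(2*L) * c1^(2*L) * 16^L * norm z^(2*L) / (d2^(2*L) * d2^(2*L) * d2^(2*L))"
      by (simp add: power_divide power_mult_distrib flip: power_mult power_add)
    show ?thesis unfolding a using dl0 d20 by (simp add: field_simps power2_eq_square)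
  qed
  also have "\<dots> \<le> (norm lam / dl) * (c1^4 * 16 * norm z ^ 2 / d2^6)^L / fact L"
  proof -
    have f1: "fact L \<le> (fact (2*L) :: real)" by (rule fact_mono) simp
    have "(1::real) \<le> fact (2*L)" by simp
    then have "fact (2*L) * 1 \<le> (fact (2*L) * fact (2*L) :: real)" by (intro mult_left_mono) auto
    then have f2: "fact (2*L) \<le> (fact (2*L) * fact (2*L) :: real)" by simp
    have "fact L \<le> (fact (2*L) * fact (2*L) :: real)" using f1 f2 by linarith
    then show ?thesis using dl0 d20 by (intro divide_left_mono) auto
  qed
  finally show ?thesis unfolding c1_def .
qed


definition Aexp :: "complex \<Rightarrow> complex \<Rightarrow> nat \<Rightarrow> complex" where
 "Aexp lam z L = lam * (pochhammer (lam + 1/2) (2*L))\<^sup>2 * 16^L * z^(2*L) /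
           (fact (2*L) * (of_nat (2*L) + lam) * pochhammer (2*lam) (2*L) * (pochhammer (of_nat (2*L) + 2*lam) (2*L))\<^sup>2)"

definition Bexp :: "complex \<Rightarrow> complex \<Rightarrow> complex \<Rightarrow> nat \<Rightarrow> nat \<Rightarrow> complex" where
 "Bexp lam c z L i = z^i * pochhammer (1/2) (L+i) / (pochhammer (of_nat (2*L) + lam + 1) i * fact i * 4^i * pochhammer (c+1) (L+i))"

lemma fam_split_gen:
  fixes zL zi zj lam hp hq Q s16 F E X Y Ii Jj fi fj f4i f4j mp mq :: complex
  shows "zL * zi * zj * (lam * hp * hq * Q\<^sup>2 * s16 / (F * E * X * Y\<^sup>2 * Ii * Jj * (fi * fj) * (f4i * f4j))) / (mp * mq)
    = (lam * Q\<^sup>2 * s16 * zL / (F * E * X * Y\<^sup>2)) * ((zi * hp / (Ii * fi * f4i * mp)) * (zj * hq / (Jj * fj * f4j * mq)))"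
  by (simp add: divide_inverse inverse_mult_distrib mult_ac)

lemma fam_split:
  "z^(2*L+i+j) * phi0 lam L i j / (pochhammer (\<mu>+1) (L+i) * pochhammer (\<nu>+1) (L+j))
     = Aexp lam z L * (Bexp lam \<mu> z L i * Bexp lam \<nu> z L j)"
  unfolding phi0_def Aexp_def Bexp_def power_add by (rule fam_split_gen)

lemma fam_summable:
  fixes lam \<mu> \<nu> z :: complex
  assumes a2: "2*lam \<notin> \<int>\<^sub>\<le>\<^sub>0" and am: "\<mu>+1 \<notin> \<int>\<^sub>\<le>\<^sub>0" and an: "\<nu>+1 \<notin> \<int>\<^sub>\<le>\<^sub>0"
  shows "(\<lambda>(L,i,j). z^(2*L+i+j) * phi0 lam L i j / (pochhammer (\<mu>+1) (L+i) * pochhammer (\<nu>+1) (L+j))) summable_on UNIV"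
proof -
  have lnp: "lam \<notin> \<int>\<^sub>\<le>\<^sub>0" using two_nonpos_imp[OF a2] by simp
  obtain dl where dl: "dl > 0" "\<forall>m::nat. dl * (of_nat m + 1) \<le> norm (lam + of_nat m)" using delta_exists[OF lnp] by blast
  obtain d2 where d2: "d2 > 0" "\<forall>m::nat. d2 * (of_nat m + 1) \<le> norm (2*lam + of_nat m)" using delta_exists[OF a2] by blast
  obtain dm where dm: "dm > 0" "\<forall>m::nat. dm * (of_nat m + 1) \<le> norm ((\<mu>+1) + of_nat m)" using delta_exists[OF am] by blast
  obtain dn where dn: "dn > 0" "\<forall>m::nat. dn * (of_nat m + 1) \<le> norm ((\<nu>+1) + of_nat m)" using delta_exists[OF an] by blast
  define MA where "MA = (norm (lam + 1/2) + 1)^4 * 16 * norm z ^ 2 / d2^6"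
  define Rm where "Rm = 3 * norm z / (8*dl*dm)"
  define Rn where "Rn = 3 * norm z / (8*dl*dn)"
  define gA where "gA = (\<lambda>L::nat. (norm lam / dl) * ((MA * (3/(2*dm)) * (3/(2*dn)))^L / fact L))"
  define gB where "gB = (\<lambda>i::nat. Rm^i / fact i)"
  define gC where "gC = (\<lambda>j::nat. Rn^j / fact j)"
  have MA0: "MA \<ge> 0" unfolding MA_def using d2 by simp
  have gA0: "gA L \<ge> 0" for L unfolding gA_def using dl dm dn MA0 by simp
  have gB0: "gB i \<ge> 0" for i unfolding gB_def Rm_def using dl dm by simp
  have gC0: "gC j \<ge> 0" for j unfolding gC_def Rn_def using dl dn by simp
  have sA: "gA summable_on UNIV" unfolding gA_def by (intro summable_on_cmult_right exp_series_summable_on)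
  have sB: "gB summable_on UNIV" unfolding gB_def by (rule exp_series_summable_on)
  have sC: "gC summable_on UNIV" unfolding gC_def by (rule exp_series_summable_on)
  have sBC: "(\<lambda>(i,j). gB i * gC j) summable_on UNIV" by (rule prod_summable_on[OF gB0 gC0 sB sC])
  have sABC: "(\<lambda>(L,ij). gA L * (\<lambda>(i,j). gB i * gC j) ij) summable_on UNIV"
    by (rule prod_summable_on[OF gA0 _ sA sBC]) (use gB0 gC0 in \<open>auto intro: mult_nonneg_nonneg\<close>)
  have bound: "norm ((\<lambda>(L,i,j). z^(2*L+i+j) * phi0 lam L i j / (pochhammer (\<mu>+1) (L+i) * pochhammer (\<nu>+1) (L+j))) x)
      \<le> (\<lambda>(L,ij). gA L * (\<lambda>(i,j). gB i * gC j) ij) x" for x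
  proof -
    obtain L i j where x: "x = (L,i,j)" by (cases x) auto
    have bA: "norm (Aexp lam z L) \<le> (norm lam / dl) * MA^L / fact L"
      unfolding Aexp_def MA_def by (rule A_bound[OF dl d2])
    have bB: "norm (Bexp lam \<mu> z L i) \<le> (3/(2*dm))^L * Rm^i / fact i"
      unfolding Bexp_def Rm_def by (rule B_bound[OF dl dm])
    have bC: "norm (Bexp lam \<nu> z L j) \<le> (3/(2*dn))^L * Rn^j / fact j"
      unfolding Bexp_def Rn_def by (rule B_bound[OF dl dn])
    have "norm (Aexp lam z L * (Bexp lam \<mu> z L i * Bexp lam \<nu> z L j))
        = norm (Aexp lam z L) * (norm (Bexp lam \<mu> z L i) * norm (Bexp lam \<nu> z L j))" by (simp add: norm_mult)
    also have "\<dots> \<le> ((norm lam / dl) * MA^L / fact L) * (((3/(2*dm))^L * Rm^i / fact i) * ((3/(2*dn))^L * Rn^j / fact j))"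
      using MA0 by (intro mult_mono bA bB bC) (auto simp: Rm_def Rn_def intro!: mult_nonneg_nonneg divide_nonneg_nonneg
          simp: dl(1) dm(1) dn(1) less_imp_le)
    also have "\<dots> = gA L * (gB i * gC j)"
    proof -
      have h9: "(3::real)^L * 3^L = 9^L" "(2::real)^L * 2^L = 4^L" by (simp_all flip: power_mult_distrib)
      show ?thesis unfolding gA_def gB_def gC_def by (simp add: power_mult_distrib field_simps h9)
    qed
    finally show ?thesis unfolding x using fam_split[of z L i j lam \<mu> \<nu>] by simp
  qed
  have "(\<lambda>x. norm ((\<lambda>(L,i,j). z^(2*L+i+j) * phi0 lam L i j / (pochhammer (\<mu>+1) (L+i) * pochhammer (\<nu>+1) (L+j))) x)) summable_on UNIV"
    by (rule Infinite_Sum.abs_summable_on_comparison_test'[OF sABC bound])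
  then show ?thesis by (rule Infinite_Sum.abs_summable_summable)
qed


lemma hypF_aterm:
  "hypF [of_nat L + 1/2] [of_nat (2*L) + lam + 1, of_nat L + \<mu> + 1] (- k\<^sup>2 / 4) = suminf (aterm lam \<mu> k L)"
  unfolding hypF_def aterm_def by simp

lemma exp_series_summable:
  fixes x :: real
  shows "summable (\<lambda>n. x^n / fact n)"
  using summable_exp[of x] by (simp add: field_simps)

lemma div_rearr: "(a::real) / (b*c) * w / f = a * w / (b*c*f)"
  by (simp add: divide_inverse mult_ac)

lemma aterm_norm_summable:
  fixes lam \<mu> k :: complex
  assumes lnp: "lam \<notin> \<int>\<^sub>\<le>\<^sub>0" and am: "\<mu>+1 \<notin> \<int>\<^sub>\<le>\<^sub>0"
  shows "summable (\<lambda>i. norm (aterm lam \<mu> k L i))"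
proof -
  obtain dl where dl: "dl > 0" "\<forall>m::nat. dl * (of_nat m + 1) \<le> norm (lam + of_nat m)" using delta_exists[OF lnp] by blast
  obtain dm where dm: "dm > 0" "\<forall>m::nat. dm * (of_nat m + 1) \<le> norm ((\<mu>+1) + of_nat m)" using delta_exists[OF am] by blast
  define A0 where "A0 = norm (of_nat L + 1/2 :: complex) + 1"
  define W where "W = norm (- k\<^sup>2 / 4)"
  define R where "R = A0 * W / (dl * dm)"
  have W0: "0 \<le> W" unfolding W_def by simp
  have A00: "0 \<le> A0" unfolding A0_def by simp
  have b: "norm (aterm lam \<mu> k L i) \<le> R^i / fact i" for i
  proof -
    have h: "norm (pochhammer (of_nat L + 1/2 :: complex) i) \<le> A0^i * fact i"
      unfolding A0_def by (rule poch_upper)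
    have e1: "of_nat (2*L) + lam + 1 = lam + of_nat (2*L+1)" by simp
    have I: "dl^i * fact i \<le> norm (pochhammer (of_nat (2*L) + lam + 1) i)"
      unfolding e1 using poch_lower[of dl lam i "2*L+1"] dl by simp
    have e2: "of_nat L + \<mu> + 1 = (\<mu> + 1) + of_nat L" by simp
    have M: "dm^i * fact i \<le> norm (pochhammer (of_nat L + \<mu> + 1) i)"
      unfolding e2 using poch_lower[of dm "\<mu>+1" i L] dm by simp
    have "norm (aterm lam \<mu> k L i) = norm (pochhammer (of_nat L + 1/2 :: complex) i) * W ^ i /
        (norm (pochhammer (of_nat (2*L) + lam + 1) i) * norm (pochhammer (of_nat L + \<mu> + 1) i) * fact i)"
      unfolding aterm_def W_def by (simp only: norm_mult norm_divide norm_power norm_fact) (rule div_rearr)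
    also have "\<dots> \<le> (A0^i * fact i) * W ^ i /
        ((dl^i * fact i) * (dm^i * fact i) * fact i)"
    proof (rule frac_le)
      show "0 \<le> (A0^i * fact i) * W ^ i" using W0 A00 by simp
      show "norm (pochhammer (of_nat L + 1/2 :: complex) i) * W ^ i
          \<le> (A0^i * fact i) * W ^ i"
        by (rule mult_right_mono[OF h]) (simp add: W0)
      show "0 < dl^i * fact i * (dm^i * fact i) * fact i" using dl dm by simp
      show "dl^i * fact i * (dm^i * fact i) * fact i \<le> norm (pochhammer (of_nat (2*L) + lam + 1) i) * norm (pochhammer (of_nat L + \<mu> + 1) i) * fact i"
        by (intro mult_mono I M) (use dl dm in auto)
    qed
    also have "\<dots> = R^i / (fact i * fact i)"
      unfolding R_def using dl dm by (simp add: power_divide power_mult_distrib)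
    also have "\<dots> \<le> R^i / fact i"
    proof -
      have "(1::real) \<le> fact i" by simp
      then have "fact i * 1 \<le> (fact i * fact i :: real)" by (intro mult_left_mono) auto
      then have "fact i \<le> (fact i * fact i :: real)" by simp
      moreover have "R \<ge> 0" unfolding R_def A0_def W_def using dl dm by simp
      ultimately show ?thesis by (intro divide_left_mono) auto
    qed
    finally show ?thesis .
  qed
  show ?thesis
    by (rule summable_comparison_test[OF _ exp_series_summable[of R]]) (use b in auto)
qed

lemma has_sum_prod_series:
  fixes a b :: "nat \<Rightarrow> complex"
  assumes sa: "summable (\<lambda>n. norm (a n))" and sb: "summable (\<lambda>n. norm (b n))"
  shows "((\<lambda>(i,j). a i * b j) has_sum (suminf a * suminf b)) UNIV"
proof -
  have na: "(\<lambda>n. norm (a n)) summable_on UNIV" using norm_summable_imp_summable_on[of "\<lambda>n. norm (a n)"] sa by simp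
  have nb: "(\<lambda>n. norm (b n)) summable_on UNIV" using norm_summable_imp_summable_on[of "\<lambda>n. norm (b n)"] sb by simp
  have "(\<lambda>(i,j). norm (a i) * norm (b j)) summable_on UNIV"
    by (rule prod_summable_on[OF _ _ na nb]) auto
  moreover have "(\<lambda>x. norm ((\<lambda>(i,j). a i * b j) x)) = (\<lambda>(i,j). norm (a i) * norm (b j))"
    by (auto simp: norm_mult fun_eq_iff)
  ultimately have "(\<lambda>x. norm ((\<lambda>(i,j). a i * b j) x)) summable_on UNIV" by simp
  then have "(\<lambda>(i,j). a i * b j) summable_on UNIV" by (rule Infinite_Sum.abs_summable_summable)
  then obtain S where S: "((\<lambda>(i,j). a i * b j) has_sum S) UNIV" unfolding summable_on_def by blast
  have hb: "(b has_sum suminf b) UNIV"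
    by (rule norm_summable_imp_has_sum[OF sb]) (use summable_norm_cancel[OF sb] in \<open>simp add: summable_sums\<close>)
  have ha: "(a has_sum suminf a) UNIV"
    by (rule norm_summable_imp_has_sum[OF sa]) (use summable_norm_cancel[OF sa] in \<open>simp add: summable_sums\<close>)
  have S': "((\<lambda>(i,j). a i * b j) has_sum S) (Sigma UNIV (\<lambda>_. UNIV))" using S by simp
  have "((\<lambda>i. a i * suminf b) has_sum S) UNIV"
  proof (rule has_sum_SigmaD[OF S'])
    fix i :: nat assume "i \<in> UNIV"
    show "((\<lambda>j. (\<lambda>(i,j). a i * b j) (i, j)) has_sum a i * suminf b) UNIV"
      using has_sum_cmult_right[OF hb, of "a i"] by simp
  qed
  moreover have "((\<lambda>i. a i * suminf b) has_sum suminf a * suminf b) UNIV" by (rule has_sum_cmult_left[OF ha])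
  ultimately have "S = suminf a * suminf b" by (rule has_sum_unique)
  then show ?thesis using S by simp
qed


lemma rearr2: "(z::complex) * (X / Y / f) = X / Y * z / f"
  by (simp add: divide_inverse mult_ac)

theorem theorem3:
  fixes k \<mu> \<nu> lam :: complex
  assumes "lam \<noteq> 0"
    and "2 * lam \<notin> \<int>\<^sub>\<le>\<^sub>0"
    and "\<mu> + 1 \<notin> \<int>\<^sub>\<le>\<^sub>0" and "\<nu> + 1 \<notin> \<int>\<^sub>\<le>\<^sub>0" and "\<mu> + \<nu> + 1 \<notin> \<int>\<^sub>\<le>\<^sub>0"
  defines "T \<equiv> (\<lambda>L::nat.
      (-1) ^ (2*L) * k ^ (4*L) * (pochhammer (lam + 1/2) (2*L))\<^sup>2 * Gamma (of_nat (2*L) + 2*lam)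
      * 2 powr (of_nat (4*L) - 2*lam - \<mu> - \<nu> + 1)
      / (fact (2*L) * (of_nat (2*L) + lam) * (pochhammer (2*lam) (2*L))\<^sup>2
         * (pochhammer (of_nat (2*L) + 2*lam) (2*L))\<^sup>2
         * gpoch (of_nat L + 1/2) (\<mu> + 1/2) * gpoch (of_nat L + 1/2) (\<nu> + 1/2))
      * hypF [of_nat L + 1/2] [of_nat (2*L) + lam + 1, of_nat L + \<mu> + 1] (- k\<^sup>2 / 4)
      * hypF [of_nat L + 1/2] [of_nat (2*L) + lam + 1, of_nat L + \<nu> + 1] (- k\<^sup>2 / 4))"
  shows "summable T \<and>
    hypF [1/2, \<mu>/2 + \<nu>/2 + 1/2, \<mu>/2 + \<nu>/2 + 1] [lam + 1, \<mu> + 1, \<nu> + 1, \<mu> + \<nu> + 1] (- k\<^sup>2)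
    = Gamma (lam + 1) * 2 powr (\<mu> + \<nu>) * Gamma (\<mu> + 1) * Gamma (\<nu> + 1)
      / (of_real (sqrt pi) * Gamma (lam + 1/2) * (Gamma lam)\<^sup>2) * (\<Sum>L. T L)"
proof -
  have a2: "2 * lam \<notin> \<int>\<^sub>\<le>\<^sub>0" using assms(2) .
  have am: "\<mu> + 1 \<notin> \<int>\<^sub>\<le>\<^sub>0" using assms(3) .
  have an: "\<nu> + 1 \<notin> \<int>\<^sub>\<le>\<^sub>0" using assms(4) .
  have amn: "\<mu> + \<nu> + 1 \<notin> \<int>\<^sub>\<le>\<^sub>0" using assms(5) .
  have lnp: "lam \<notin> \<int>\<^sub>\<le>\<^sub>0" and hnp: "lam + 1/2 \<notin> \<int>\<^sub>\<le>\<^sub>0" using two_nonpos_imp[OF a2] by simp_all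
  define c0 where "c0 = cc0 lam \<mu> \<nu>"
  define z where "z = - k\<^sup>2"
  define F where "F = (\<lambda>x::nat\<times>nat\<times>nat. case x of (L,i,j) \<Rightarrow> c0 * cT0 lam \<mu> \<nu> k L * aterm lam \<mu> k L i * aterm lam \<nu> k L j)"
  have Fv: "F (L,i,j) = z^(2*L+i+j) * phi0 lam L i j / (pochhammer (\<mu>+1) (L+i) * pochhammer (\<nu>+1) (L+j))" for L i j
    unfolding F_def c0_def z_def using termC[OF a2 am an, of k L i j] by simp
  have Fs: "F summable_on UNIV"
  proof -
    have "F = (\<lambda>(L,i,j). z^(2*L+i+j) * phi0 lam L i j / (pochhammer (\<mu>+1) (L+i) * pochhammer (\<nu>+1) (L+j)))"
      by (auto simp: fun_eq_iff Fv)
    then show ?thesis using fam_summable[OF a2 am an, of z] by simp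
  qed
  then obtain S where S: "(F has_sum S) UNIV" unfolding summable_on_def by blast
  have c0nz: "c0 \<noteq> 0"
  proof -
    have l1: "lam + 1 \<notin> \<int>\<^sub>\<le>\<^sub>0" using lnp plus_one_in_nonpos_Ints_imp by blast
    have "Gamma (lam + 1) \<noteq> 0" by (rule Gamma_nonzero[OF l1])
    moreover have "(2::complex) powr (\<mu> + \<nu>) \<noteq> 0" by (simp add: two_powr_c)
    moreover have "Gamma (\<mu> + 1) \<noteq> 0" by (rule Gamma_nonzero[OF am])
    moreover have "Gamma (\<nu> + 1) \<noteq> 0" by (rule Gamma_nonzero[OF an])
    moreover have "Gamma (lam + 1/2) \<noteq> 0" by (rule Gamma_nonzero[OF hnp])
    moreover have "Gamma lam \<noteq> 0" by (rule Gamma_nonzero[OF lnp])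
    moreover have "(of_real (sqrt pi) :: complex) \<noteq> 0" by simp
    ultimately show ?thesis unfolding c0_def cc0_def by simp
  qed
  have TL: "T L = cT0 lam \<mu> \<nu> k L * suminf (aterm lam \<mu> k L) * suminf (aterm lam \<nu> k L)" for L
    unfolding T_def cT0_def hypF_aterm[symmetric] by simp
  have inner: "((\<lambda>y. F (L, y)) has_sum c0 * T L) UNIV" for L
  proof -
    have h: "((\<lambda>(i,j). aterm lam \<mu> k L i * aterm lam \<nu> k L j) has_sum (suminf (aterm lam \<mu> k L) * suminf (aterm lam \<nu> k L))) UNIV"
      by (rule has_sum_prod_series[OF aterm_norm_summable[OF lnp am] aterm_norm_summable[OF lnp an]])
    have h2: "((\<lambda>y. (c0 * cT0 lam \<mu> \<nu> k L) * (\<lambda>(i,j). aterm lam \<mu> k L i * aterm lam \<nu> k L j) y) has_sum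
        (c0 * cT0 lam \<mu> \<nu> k L) * (suminf (aterm lam \<mu> k L) * suminf (aterm lam \<nu> k L))) UNIV"
      by (rule has_sum_cmult_right[OF h])
    have e1: "(\<lambda>y. F (L,y)) = (\<lambda>y. (c0 * cT0 lam \<mu> \<nu> k L) * (\<lambda>(i,j). aterm lam \<mu> k L i * aterm lam \<nu> k L j) y)"
      by (auto simp: F_def fun_eq_iff mult_ac)
    have e2: "c0 * T L = (c0 * cT0 lam \<mu> \<nu> k L) * (suminf (aterm lam \<mu> k L) * suminf (aterm lam \<nu> k L))"
      by (simp add: TL mult_ac)
    show ?thesis unfolding e1 e2 by (rule h2)
  qed
  have SL: "((\<lambda>L. c0 * T L) has_sum S) UNIV"
  proof (rule has_sum_SigmaD[where f=F and S=S and A=UNIV and B="\<lambda>_. UNIV"])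
    show "(F has_sum S) (UNIV \<times> UNIV)" using S by simp
    show "\<And>L. L \<in> UNIV \<Longrightarrow> ((\<lambda>y. F (L, y)) has_sum c0 * T L) UNIV" using inner by blast
  qed
  then have "(\<lambda>L. c0 * T L) sums S" by (rule has_sum_imp_sums)
  then have "(\<lambda>L. c0 * T L / c0) sums (S / c0)" by (rule sums_divide)
  then have Tsums: "T sums (S / c0)" using c0nz by simp
  define D where "D = (SIGMA pq:(UNIV::(nat\<times>nat) set). {..min (fst pq) (snd pq)})"
  define G where "G = (\<lambda>x::(nat\<times>nat)\<times>nat. case x of ((p,q),L) \<Rightarrow> F (L, p - L, q - L))"
  have GS: "(G has_sum S) D"
  proof -
    have "(F has_sum S) UNIV = (G has_sum S) D"
      by (rule has_sum_reindex_bij_witness[where i="\<lambda>x::(nat\<times>nat)\<times>nat. case x of ((p,q),L) \<Rightarrow> (L, p-L, q-L)"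
          and j="\<lambda>x::nat\<times>nat\<times>nat. case x of (L,i,j) \<Rightarrow> ((L+i, L+j), L)"]) (auto simp: D_def G_def)
    then show ?thesis using S by simp
  qed
  have GI: "((\<lambda>pq. \<Sum>L\<le>min (fst pq) (snd pq). G (pq, L)) has_sum S) UNIV"
  proof (rule has_sum_SigmaD[where f=G and S=S and A=UNIV and B="\<lambda>pq. {..min (fst pq) (snd pq)}"])
    show "(G has_sum S) (SIGMA pq:UNIV. {..min (fst pq) (snd pq)})" using GS unfolding D_def .
    show "\<And>pq. pq \<in> UNIV \<Longrightarrow> ((\<lambda>L. G (pq, L)) has_sum (\<Sum>L\<le>min (fst pq) (snd pq). G (pq, L))) {..min (fst pq) (snd pq)}"
      by (rule has_sum_finite) simp
  qed
  have Gval: "(\<Sum>L\<le>min p q. G ((p,q), L)) = z^(p+q) * E0 lam p q / (pochhammer (\<mu>+1) p * pochhammer (\<nu>+1) q)" for p q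
  proof -
    have "(\<Sum>L\<le>min p q. G ((p,q), L)) = (\<Sum>L\<le>min p q. z^(p+q) / (pochhammer (\<mu>+1) p * pochhammer (\<nu>+1) q) * phi0 lam L (p-L) (q-L))"
    proof (rule sum.cong[OF refl])
      fix L assume "L \<in> {..min p q}"
      then have e: "L + (p - L) = p" "L + (q - L) = q" "2*L + (p-L) + (q-L) = p + q" by auto
      show "G ((p,q),L) = z^(p+q) / (pochhammer (\<mu>+1) p * pochhammer (\<nu>+1) q) * phi0 lam L (p-L) (q-L)"
        unfolding G_def using Fv[of L "p-L" "q-L"] e by simp
    qed
    also have "\<dots> = z^(p+q) / (pochhammer (\<mu>+1) p * pochhammer (\<nu>+1) q) * (\<Sum>L\<le>min p q. phi0 lam L (p-L) (q-L))"
      by (simp add: sum_distrib_left)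
    also have "\<dots> = z^(p+q) / (pochhammer (\<mu>+1) p * pochhammer (\<nu>+1) q) * E0 lam p q"
      using phi0_sum[OF a2] by simp
    finally show ?thesis by simp
  qed
  have PQ: "((\<lambda>(p,q). z^(p+q) * E0 lam p q / (pochhammer (\<mu>+1) p * pochhammer (\<nu>+1) q)) has_sum S) UNIV"
  proof -
    have "(\<lambda>pq. \<Sum>L\<le>min (fst pq) (snd pq). G (pq, L)) = (\<lambda>(p,q). z^(p+q) * E0 lam p q / (pochhammer (\<mu>+1) p * pochhammer (\<nu>+1) q))"
    proof (rule ext)
      fix pq :: "nat \<times> nat"
      obtain p q where pq: "pq = (p,q)" by (cases pq) auto
      show "(\<Sum>L\<le>min (fst pq) (snd pq). G (pq, L)) = (case pq of (p,q) \<Rightarrow> z^(p+q) * E0 lam p q / (pochhammer (\<mu>+1) p * pochhammer (\<nu>+1) q))"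
        unfolding pq using Gval[of p q] by simp
    qed
    then show ?thesis using GI by simp
  qed
  define D2 where "D2 = (SIGMA n:(UNIV::nat set). {..n})"
  define H where "H = (\<lambda>x::nat\<times>nat. case x of (n,p) \<Rightarrow> z^n * E0 lam p (n-p) / (pochhammer (\<mu>+1) p * pochhammer (\<nu>+1) (n-p)))"
  have HS: "(H has_sum S) D2"
  proof -
    have "((\<lambda>(p,q). z^(p+q) * E0 lam p q / (pochhammer (\<mu>+1) p * pochhammer (\<nu>+1) q)) has_sum S) UNIV = (H has_sum S) D2"
      by (rule has_sum_reindex_bij_witness[where i="\<lambda>x::nat\<times>nat. case x of (n,p) \<Rightarrow> (p, n-p)"
          and j="\<lambda>x::nat\<times>nat. case x of (p,q) \<Rightarrow> (p+q, p)"]) (auto simp: D2_def H_def)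
    then show ?thesis using PQ by simp
  qed
  have HI: "((\<lambda>n. \<Sum>p\<le>n. H (n, p)) has_sum S) UNIV"
  proof (rule has_sum_SigmaD[where f=H and S=S and A=UNIV and B="\<lambda>n. {..n}"])
    show "(H has_sum S) (SIGMA n:UNIV. {..n})" using HS unfolding D2_def .
    show "\<And>n. n \<in> UNIV \<Longrightarrow> ((\<lambda>p. H (n, p)) has_sum (\<Sum>p\<le>n. H (n, p))) {..n}"
      by (rule has_sum_finite) simp
  qed
  have Hval: "(\<Sum>p\<le>n. H (n, p)) = z^n * (pochhammer (1/2) n * (pochhammer (\<mu>/2+\<nu>/2+1/2) n * pochhammer (\<mu>/2+\<nu>/2+1) n)
       / (pochhammer (lam+1) n * (pochhammer (\<mu>+1) n * (pochhammer (\<nu>+1) n * pochhammer (\<mu>+\<nu>+1) n))) / fact n)" for n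
  proof -
    have "(\<Sum>p\<le>n. H (n, p)) = z^n * (\<Sum>p\<le>n. E0 lam p (n-p) / (pochhammer (\<mu>+1) p * pochhammer (\<nu>+1) (n-p)))"
      unfolding H_def by (simp add: sum_distrib_left mult.assoc)
    also have "\<dots> = z^n * (pochhammer (1/2) n * (pochhammer (\<mu>/2+\<nu>/2+1/2) n * pochhammer (\<mu>/2+\<nu>/2+1) n)
       / (pochhammer (lam+1) n * (pochhammer (\<mu>+1) n * (pochhammer (\<nu>+1) n * pochhammer (\<mu>+\<nu>+1) n))) / fact n)"
      using lhs_coeff[OF lnp am an amn, of n] by simp
    finally show ?thesis .
  qed
  have LHS: "hypF [1/2, \<mu>/2 + \<nu>/2 + 1/2, \<mu>/2 + \<nu>/2 + 1] [lam + 1, \<mu> + 1, \<nu> + 1, \<mu> + \<nu> + 1] (- k\<^sup>2) = S"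
  proof -
    have "(\<lambda>n. \<Sum>p\<le>n. H (n, p)) sums S" using HI by (rule has_sum_imp_sums)
    moreover have "(\<lambda>n. \<Sum>p\<le>n. H (n, p)) = (\<lambda>n. (\<Prod>a\<leftarrow>[1/2, \<mu>/2 + \<nu>/2 + 1/2, \<mu>/2 + \<nu>/2 + 1]. pochhammer a n) /
          (\<Prod>b\<leftarrow>[lam + 1, \<mu> + 1, \<nu> + 1, \<mu> + \<nu> + 1]. pochhammer b n) * (- k\<^sup>2) ^ n / fact n)"
      unfolding Hval z_def by (simp add: rearr2) (simp add: mult.commute)
    ultimately show ?thesis unfolding hypF_def by (simp add: sums_iff)
  qed
  show ?thesis
  proof
    show "summable T" using Tsums by (rule sums_summable)
    have "suminf T = S / c0" using Tsums by (rule sums_unique[symmetric])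
    then have "c0 * (\<Sum>L. T L) = S" using c0nz by simp
    then show "hypF [1/2, \<mu>/2 + \<nu>/2 + 1/2, \<mu>/2 + \<nu>/2 + 1] [lam + 1, \<mu> + 1, \<nu> + 1, \<mu> + \<nu> + 1] (- k\<^sup>2)
      = Gamma (lam + 1) * 2 powr (\<mu> + \<nu>) * Gamma (\<mu> + 1) * Gamma (\<nu> + 1)
        / (of_real (sqrt pi) * Gamma (lam + 1/2) * (Gamma lam)\<^sup>2) * (\<Sum>L. T L)"
      unfolding LHS c0_def cc0_def by simp
  qed
qed


end
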